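(* Let $(H,R)$ be a quasitriangular semisimple Hopf algebra over a field $k$, and let $f_Q:H^*\to H$ be the Drinfeld map. Then $f_Q$ maps every subcoalgebra of $H^*$ to a left coideal of $H$ stable under the left adjoint action of $H$, and maps every Hopf subalgebra of $H^*$ to a normal left coideal subalgebra of $H$.
   Context: Write $R=\sum R^1\otimes R^2$, $Q=R^{21}R=\sum Q^1\otimes Q^2$; the Drinfeld map is $f_Q(p)=\sum\langle p,Q^1\rangle Q^2$ for $p\in H^*$. The left adjoint action is $h\cdot a=\sum h_1aS(h_2)$. A left coideal subalgebra is normal if it is stable under the left adjoint action. *)

theory Defs
  imports Main
begin

text \<open>A finite-dimensional algebra over a field 'a is presented by a basis indexed
  by a finite type 'i; elements are coordinate vectors 'i => 'a, elements of H (x) H are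
  coefficient matrices 'i => 'i => 'a (coefficient of e_i (x) e_j), and H^* is
  identified with 'i => 'a via the dual basis.\<close>

record ('i, 'a) hopf_data =
  mu  :: "'i \<Rightarrow> 'i \<Rightarrow> 'i \<Rightarrow> 'a"   (* e_i e_j = sum_l mu i j l e_l *)
  one :: "'i \<Rightarrow> 'a"
  dl  :: "'i \<Rightarrow> 'i \<Rightarrow> 'i \<Rightarrow> 'a"   (* Delta e_l = sum_{i,j} dl l i j e_i (x) e_j *)
  ep  :: "'i \<Rightarrow> 'a"
  ant :: "'i \<Rightarrow> 'i \<Rightarrow> 'a"           (* S e_i = sum_j ant i j e_j *)

definition vzero :: "'i \<Rightarrow> 'a::field" where "vzero = (\<lambda>_. 0)"
definition vadd :: "('i \<Rightarrow> 'a::field) \<Rightarrow> ('i \<Rightarrow> 'a) \<Rightarrow> 'i \<Rightarrow> 'a" where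
  "vadd x y = (\<lambda>i. x i + y i)"
definition vsmult :: "'a::field \<Rightarrow> ('i \<Rightarrow> 'a) \<Rightarrow> 'i \<Rightarrow> 'a" where
  "vsmult c x = (\<lambda>i. c * x i)"
definition bvec :: "'i \<Rightarrow> 'i \<Rightarrow> 'a::field" where
  "bvec i = (\<lambda>k. if k = i then 1 else 0)"

definition subspace :: "('i \<Rightarrow> 'a::field) set \<Rightarrow> bool" where
  "subspace V \<longleftrightarrow> vzero \<in> V \<and> (\<forall>x\<in>V. \<forall>y\<in>V. vadd x y \<in> V) \<and> (\<forall>c. \<forall>x\<in>V. vsmult c x \<in> V)"

definition in_tensor :: "('i \<Rightarrow> 'a::field) set \<Rightarrow> ('i \<Rightarrow> 'a) set \<Rightarrow> ('i \<Rightarrow> 'i \<Rightarrow> 'a) \<Rightarrow> bool" where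
  "in_tensor V W T \<longleftrightarrow> (\<exists>ps. set ps \<subseteq> V \<times> W \<and> T = (\<lambda>i j. \<Sum>(v, w)\<leftarrow>ps. v i * w j))"

definition hmul :: "('i::finite, 'a::field) hopf_data \<Rightarrow> ('i \<Rightarrow> 'a) \<Rightarrow> ('i \<Rightarrow> 'a) \<Rightarrow> 'i \<Rightarrow> 'a" where
  "hmul H x y = (\<lambda>l. \<Sum>i\<in>UNIV. \<Sum>j\<in>UNIV. x i * y j * mu H i j l)"
definition hcomul :: "('i::finite, 'a::field) hopf_data \<Rightarrow> ('i \<Rightarrow> 'a) \<Rightarrow> 'i \<Rightarrow> 'i \<Rightarrow> 'a" where
  "hcomul H x = (\<lambda>i j. \<Sum>l\<in>UNIV. x l * dl H l i j)"
definition hcounit :: "('i::finite, 'a::field) hopf_data \<Rightarrow> ('i \<Rightarrow> 'a) \<Rightarrow> 'a" where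
  "hcounit H x = (\<Sum>l\<in>UNIV. x l * ep H l)"
definition hS :: "('i::finite, 'a::field) hopf_data \<Rightarrow> ('i \<Rightarrow> 'a) \<Rightarrow> 'i \<Rightarrow> 'a" where
  "hS H x = (\<lambda>j. \<Sum>i\<in>UNIV. x i * ant H i j)"

definition mult_map :: "('i::finite, 'a::field) hopf_data \<Rightarrow> ('i \<Rightarrow> 'i \<Rightarrow> 'a) \<Rightarrow> 'i \<Rightarrow> 'a" where
  "mult_map H T = (\<lambda>l. \<Sum>i\<in>UNIV. \<Sum>j\<in>UNIV. T i j * mu H i j l)"
definition tmul :: "('i::finite, 'a::field) hopf_data \<Rightarrow> ('i \<Rightarrow> 'i \<Rightarrow> 'a) \<Rightarrow> ('i \<Rightarrow> 'i \<Rightarrow> 'a) \<Rightarrow> 'i \<Rightarrow> 'i \<Rightarrow> 'a" where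
  "tmul H T U = (\<lambda>i j. \<Sum>a\<in>UNIV. \<Sum>b\<in>UNIV. \<Sum>c\<in>UNIV. \<Sum>d\<in>UNIV.
      T a b * U c d * mu H a c i * mu H b d j)"
definition tone :: "('i::finite, 'a::field) hopf_data \<Rightarrow> 'i \<Rightarrow> 'i \<Rightarrow> 'a" where
  "tone H = (\<lambda>i j. one H i * one H j)"
definition t3mul :: "('i::finite, 'a::field) hopf_data \<Rightarrow> ('i \<Rightarrow> 'i \<Rightarrow> 'i \<Rightarrow> 'a) \<Rightarrow> ('i \<Rightarrow> 'i \<Rightarrow> 'i \<Rightarrow> 'a) \<Rightarrow> 'i \<Rightarrow> 'i \<Rightarrow> 'i \<Rightarrow> 'a" where
  "t3mul H T U = (\<lambda>i j k. \<Sum>a\<in>UNIV. \<Sum>b\<in>UNIV. \<Sum>c\<in>UNIV. \<Sum>a'\<in>UNIV. \<Sum>b'\<in>UNIV. \<Sum>c'\<in>UNIV.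
      T a b c * U a' b' c' * mu H a a' i * mu H b b' j * mu H c c' k)"

definition hopf_algebra :: "('i::finite, 'a::field) hopf_data \<Rightarrow> bool" where
  "hopf_algebra H \<longleftrightarrow>
     (\<forall>x y z. hmul H (hmul H x y) z = hmul H x (hmul H y z)) \<and>
     (\<forall>x. hmul H (one H) x = x \<and> hmul H x (one H) = x) \<and>
     (\<forall>x i j k. (\<Sum>m\<in>UNIV. hcomul H x m k * dl H m i j) = (\<Sum>m\<in>UNIV. hcomul H x i m * dl H m j k)) \<and>
     (\<forall>x j. (\<Sum>i\<in>UNIV. ep H i * hcomul H x i j) = x j) \<and>
     (\<forall>x i. (\<Sum>j\<in>UNIV. hcomul H x i j * ep H j) = x i) \<and>
     (\<forall>x y. hcomul H (hmul H x y) = tmul H (hcomul H x) (hcomul H y)) \<and>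
     hcomul H (one H) = tone H \<and>
     (\<forall>x y. hcounit H (hmul H x y) = hcounit H x * hcounit H y) \<and>
     hcounit H (one H) = 1 \<and>
     (\<forall>x. mult_map H (\<lambda>a b. \<Sum>i\<in>UNIV. hcomul H x i b * ant H i a) = vsmult (hcounit H x) (one H)) \<and>
     (\<forall>x. mult_map H (\<lambda>a b. \<Sum>j\<in>UNIV. hcomul H x a j * ant H j b) = vsmult (hcounit H x) (one H))"

definition left_ideal :: "('i::finite, 'a::field) hopf_data \<Rightarrow> ('i \<Rightarrow> 'a) set \<Rightarrow> bool" where
  "left_ideal H L \<longleftrightarrow> subspace L \<and> (\<forall>h. \<forall>x\<in>L. hmul H h x \<in> L)"
definition semisimple :: "('i::finite, 'a::field) hopf_data \<Rightarrow> bool" where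
  "semisimple H \<longleftrightarrow> (\<forall>L. left_ideal H L \<longrightarrow>
      (\<exists>L'. left_ideal H L' \<and> L \<inter> L' = {vzero} \<and> (\<forall>x. \<exists>a\<in>L. \<exists>b\<in>L'. x = vadd a b)))"

definition quasitriangular :: "('i::finite, 'a::field) hopf_data \<Rightarrow> ('i \<Rightarrow> 'i \<Rightarrow> 'a) \<Rightarrow> bool" where
  "quasitriangular H R \<longleftrightarrow>
     (\<exists>Ri. tmul H R Ri = tone H \<and> tmul H Ri R = tone H) \<and>
     (\<forall>x. tmul H (\<lambda>i j. hcomul H x j i) R = tmul H R (hcomul H x)) \<and>
     (\<lambda>i j k. \<Sum>m\<in>UNIV. R m k * dl H m i j) =
        t3mul H (\<lambda>i j k. R i k * one H j) (\<lambda>i j k. one H i * R j k) \<and>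
     (\<lambda>i j k. \<Sum>m\<in>UNIV. R i m * dl H m j k) =
        t3mul H (\<lambda>i j k. R i k * one H j) (\<lambda>i j k. R i j * one H k)"

definition dcomul :: "('i::finite, 'a::field) hopf_data \<Rightarrow> ('i \<Rightarrow> 'a) \<Rightarrow> 'i \<Rightarrow> 'i \<Rightarrow> 'a" where
  "dcomul H p = (\<lambda>i j. \<Sum>l\<in>UNIV. p l * mu H i j l)"
definition dmul :: "('i::finite, 'a::field) hopf_data \<Rightarrow> ('i \<Rightarrow> 'a) \<Rightarrow> ('i \<Rightarrow> 'a) \<Rightarrow> 'i \<Rightarrow> 'a" where
  "dmul H p q = (\<lambda>l. \<Sum>i\<in>UNIV. \<Sum>j\<in>UNIV. p i * q j * dl H l i j)"
definition dS :: "('i::finite, 'a::field) hopf_data \<Rightarrow> ('i \<Rightarrow> 'a) \<Rightarrow> 'i \<Rightarrow> 'a" where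
  "dS H p = (\<lambda>i. \<Sum>j\<in>UNIV. ant H i j * p j)"

definition subcoalgebra_dual :: "('i::finite, 'a::field) hopf_data \<Rightarrow> ('i \<Rightarrow> 'a) set \<Rightarrow> bool" where
  "subcoalgebra_dual H C \<longleftrightarrow> subspace C \<and> (\<forall>p\<in>C. in_tensor C C (dcomul H p))"
definition hopf_subalgebra_dual :: "('i::finite, 'a::field) hopf_data \<Rightarrow> ('i \<Rightarrow> 'a) set \<Rightarrow> bool" where
  "hopf_subalgebra_dual H A \<longleftrightarrow> subcoalgebra_dual H A \<and> ep H \<in> A \<and>
     (\<forall>p\<in>A. \<forall>q\<in>A. dmul H p q \<in> A) \<and> (\<forall>p\<in>A. dS H p \<in> A)"

definition left_coideal :: "('i::finite, 'a::field) hopf_data \<Rightarrow> ('i \<Rightarrow> 'a) set \<Rightarrow> bool" where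
  "left_coideal H L \<longleftrightarrow> subspace L \<and> (\<forall>x\<in>L. in_tensor UNIV L (hcomul H x))"
definition ad :: "('i::finite, 'a::field) hopf_data \<Rightarrow> ('i \<Rightarrow> 'a) \<Rightarrow> ('i \<Rightarrow> 'a) \<Rightarrow> 'i \<Rightarrow> 'a" where
  "ad H h a = (\<lambda>l. \<Sum>i\<in>UNIV. \<Sum>j\<in>UNIV.
      hcomul H h i j * hmul H (hmul H (bvec i) a) (hS H (bvec j)) l)"
definition ad_stable :: "('i::finite, 'a::field) hopf_data \<Rightarrow> ('i \<Rightarrow> 'a) set \<Rightarrow> bool" where
  "ad_stable H L \<longleftrightarrow> (\<forall>h. \<forall>a\<in>L. ad H h a \<in> L)"
definition left_coideal_subalgebra :: "('i::finite, 'a::field) hopf_data \<Rightarrow> ('i \<Rightarrow> 'a) set \<Rightarrow> bool" where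
  "left_coideal_subalgebra H L \<longleftrightarrow> left_coideal H L \<and> one H \<in> L \<and> (\<forall>x\<in>L. \<forall>y\<in>L. hmul H x y \<in> L)"
definition normal_lcs :: "('i::finite, 'a::field) hopf_data \<Rightarrow> ('i \<Rightarrow> 'a) set \<Rightarrow> bool" where
  "normal_lcs H L \<longleftrightarrow> left_coideal_subalgebra H L \<and> ad_stable H L"

definition Qel :: "('i::finite, 'a::field) hopf_data \<Rightarrow> ('i \<Rightarrow> 'i \<Rightarrow> 'a) \<Rightarrow> 'i \<Rightarrow> 'i \<Rightarrow> 'a" where
  "Qel H R = tmul H (\<lambda>i j. R j i) R"
definition drinfeld :: "('i::finite, 'a::field) hopf_data \<Rightarrow> ('i \<Rightarrow> 'i \<Rightarrow> 'a) \<Rightarrow> ('i \<Rightarrow> 'a) \<Rightarrow> 'i \<Rightarrow> 'a" where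
  "drinfeld H R p = (\<lambda>j. \<Sum>i\<in>UNIV. p i * Qel H R i j)"

end

theory Submission
  imports Defs
begin


lemma if0_mult[simp]: "(if P then a else 0) * (y::'a::field) = (if P then a * y else 0)" by simp
lemma mult_if0[simp]: "(y::'a::field) * (if P then a else 0) = (if P then y * a else 0)" by simp
lemma sum_if_const[simp]: "(\<Sum>j\<in>A. if P then f j else (0::'a::comm_monoid_add)) = (if P then (\<Sum>j\<in>A. f j) else 0)" by simp

definition S1 :: "('i::finite \<Rightarrow> 'a::field) \<Rightarrow> ('i \<Rightarrow> 'a) \<Rightarrow> 'a" where
  "S1 x F = (\<Sum>i\<in>UNIV. x i * F i)"
definition S2 :: "('i::finite \<Rightarrow> 'i \<Rightarrow> 'a::field) \<Rightarrow> ('i \<Rightarrow> 'i \<Rightarrow> 'a) \<Rightarrow> 'a" where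
  "S2 T F = (\<Sum>i\<in>UNIV. \<Sum>j\<in>UNIV. T i j * F i j)"

lemma S1_bvec[simp]: "S1 (bvec a) F = F a"
  by (simp add: S1_def bvec_def)
lemma S1_bvec2[simp]: "S1 x (bvec l) = x l"
  by (simp add: S1_def bvec_def)
lemma S1_bvec2'[simp]: "S1 x (\<lambda>i. bvec i l) = x l"
  by (simp add: S1_def bvec_def)

lemma S1_cmult: "c * S1 x F = S1 x (\<lambda>i. c * F i)"
  unfolding S1_def sum_distrib_left by (simp add: mult_ac)
lemma S1_multc: "S1 x F * c = S1 x (\<lambda>i. F i * c)"
  unfolding S1_def sum_distrib_right by (simp add: mult_ac)
lemma S2_cmult: "c * S2 T F = S2 T (\<lambda>i j. c * F i j)"
  unfolding S2_def sum_distrib_left by (simp add: mult_ac)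
lemma S2_multc: "S2 T F * c = S2 T (\<lambda>i j. F i j * c)"
  unfolding S2_def sum_distrib_right by (simp add: mult_ac)
lemma S1_add: "S1 x (\<lambda>i. F i + G i) = S1 x F + S1 x G"
  by (simp add: S1_def sum.distrib distrib_left)
lemma S2_add: "S2 T (\<lambda>i j. F i j + G i j) = S2 T F + S2 T G"
  by (simp add: S2_def sum.distrib distrib_left)

lemma S2_pair: "S2 T F = (\<Sum>p\<in>UNIV. T (fst p) (snd p) * F (fst p) (snd p))"
  unfolding S2_def sum.cartesian_product UNIV_Times_UNIV[symmetric] by (simp add: case_prod_beta)

lemma S1_swap: "S1 x (\<lambda>i. S1 y (\<lambda>j. F i j)) = S1 y (\<lambda>j. S1 x (\<lambda>i. F i j))"
  unfolding S1_def by (simp add: sum_distrib_left mult_ac) (rule sum.swap)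
lemma S2_swap: "S2 T (\<lambda>i j. S2 U (\<lambda>k l. F i j k l)) = S2 U (\<lambda>k l. S2 T (\<lambda>i j. F i j k l))"
  unfolding S2_pair by (simp add: sum_distrib_left mult_ac) (rule sum.swap)
lemma S1S2_swap: "S1 x (\<lambda>i. S2 U (\<lambda>k l. F i k l)) = S2 U (\<lambda>k l. S1 x (\<lambda>i. F i k l))"
  unfolding S2_pair S1_def by (simp add: sum_distrib_left mult_ac) (rule sum.swap)

lemma S1_vec1: "S1 (\<lambda>l. S1 x (\<lambda>i. F i l)) \<phi> = S1 x (\<lambda>i. S1 (F i) \<phi>)"
  unfolding S1_def by (simp add: sum_distrib_left sum_distrib_right mult_ac) (rule sum.swap)
lemma S1_vec2: "S1 (\<lambda>l. S2 T (\<lambda>i j. F i j l)) \<phi> = S2 T (\<lambda>i j. S1 (F i j) \<phi>)"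
  unfolding S1_def S2_pair by (simp add: sum_distrib_left sum_distrib_right mult_ac) (rule sum.swap)
lemma S1_vecc: "S1 (\<lambda>l. c * x l) \<phi> = c * S1 x \<phi>"
  unfolding S1_def by (simp add: sum_distrib_left mult_ac)

lemma vec_eqI: "(\<And>\<phi>. S1 x \<phi> = S1 y \<phi>) \<Longrightarrow> x = y"
  by (metis S1_bvec2 ext)
lemma ten_eqI: "(\<And>\<Phi>. S2 T \<Phi> = S2 U \<Phi>) \<Longrightarrow> T = U"
proof -
  assume h: "\<And>\<Phi>. S2 T \<Phi> = S2 U \<Phi>"
  have "T i j = U i j" for i j
    using h[of "\<lambda>a b. bvec i a * bvec j b"] by (simp add: S2_def bvec_def)
  then show ?thesis by (intro ext)
qed

definition S3 :: "('i::finite \<Rightarrow> 'i \<Rightarrow> 'i \<Rightarrow> 'a::field) \<Rightarrow> ('i \<Rightarrow> 'i \<Rightarrow> 'i \<Rightarrow> 'a) \<Rightarrow> 'a" where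
  "S3 T F = (\<Sum>i\<in>UNIV. \<Sum>j\<in>UNIV. \<Sum>k\<in>UNIV. T i j k * F i j k)"

lemma S2_vec1: "S2 (\<lambda>i j. S1 x (\<lambda>l. F l i j)) \<Phi> = S1 x (\<lambda>l. S2 (F l) \<Phi>)"
  unfolding S1_def S2_pair sum_distrib_left sum_distrib_right by (simp add: mult_ac) (rule sum.swap)
lemma S2_vec2: "S2 (\<lambda>i j. S2 T (\<lambda>a b. F a b i j)) \<Phi> = S2 T (\<lambda>a b. S2 (F a b) \<Phi>)"
  unfolding S2_pair sum_distrib_left sum_distrib_right by (simp add: mult_ac) (rule sum.swap)
lemma S2_pure: "S2 (\<lambda>i j. x i * y j) \<Phi> = S1 x (\<lambda>i. S1 y (\<lambda>j. \<Phi> i j))"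
  unfolding S1_def S2_def sum_distrib_left by (simp add: mult_ac)
lemma S3_prod: "S3 T F = (\<Sum>p\<in>UNIV. T (fst p) (fst (snd p)) (snd (snd p)) * F (fst p) (fst (snd p)) (snd (snd p)))"
    unfolding S3_def sum.cartesian_product UNIV_Times_UNIV[symmetric] by (simp add: case_prod_beta)
lemma S3_vec2: "S3 (\<lambda>i j k. S3 T (\<lambda>a b c. F a b c i j k)) \<Psi> = S3 T (\<lambda>a b c. S3 (F a b c) \<Psi>)"
  unfolding S3_prod sum_distrib_left sum_distrib_right by (simp add: mult_ac) (rule sum.swap)
lemma S3_pure3: "S3 (\<lambda>i j k. x i * y j * z k) \<Psi> = S1 x (\<lambda>i. S1 y (\<lambda>j. S1 z (\<lambda>k. \<Psi> i j k)))"
  unfolding S1_def S3_def sum_distrib_left by (simp add: mult_ac)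

lemma hmul_S: "hmul H x y = (\<lambda>l. S1 x (\<lambda>i. S1 y (\<lambda>j. mu H i j l)))"
  unfolding hmul_def S1_def sum_distrib_left by (simp add: mult_ac)
lemma hS_S: "hS H x = (\<lambda>j. S1 x (\<lambda>i. ant H i j))"
  unfolding hS_def S1_def by (simp add: mult_ac)
lemma hcomul_S: "hcomul H x = (\<lambda>i j. S1 x (\<lambda>l. dl H l i j))"
  unfolding hcomul_def S1_def by (simp add: mult_ac)
lemma tmul_S: "tmul H T U = (\<lambda>i j. S2 T (\<lambda>a b. S2 U (\<lambda>c d. mu H a c i * mu H b d j)))"
  unfolding tmul_def S2_def sum_distrib_left by (simp add: mult_ac)
lemma t3mul_S: "t3mul H T U = (\<lambda>i j k. S3 T (\<lambda>a b c. S3 U (\<lambda>a' b' c'. mu H a a' i * mu H b b' j * mu H c c' k)))"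
  unfolding t3mul_def S3_def sum_distrib_left by (simp add: mult_ac)

lemma S1_hmul: "S1 (hmul H x y) \<phi> = S1 x (\<lambda>a. S1 y (\<lambda>b. S1 (mu H a b) \<phi>))"
  unfolding hmul_S by (simp add: S1_vec1)
lemma S1_hS: "S1 (hS H x) \<phi> = S1 x (\<lambda>i. S1 (ant H i) \<phi>)"
  unfolding hS_S by (simp add: S1_vec1)
lemma S2_hcomul: "S2 (hcomul H x) \<Phi> = S1 x (\<lambda>l. S2 (dl H l) \<Phi>)"
  unfolding hcomul_S by (simp add: S2_vec1)
lemma S2_tmul: "S2 (tmul H T U) \<Phi> = S2 T (\<lambda>a b. S2 U (\<lambda>c d. S1 (mu H a c) (\<lambda>i. S1 (mu H b d) (\<lambda>j. \<Phi> i j))))"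
  unfolding tmul_S by (simp add: S2_vec2 S2_pure)
lemma S3_t3mul: "S3 (t3mul H T U) \<Psi> = S3 T (\<lambda>a b c. S3 U (\<lambda>a' b' c'. S1 (mu H a a') (\<lambda>i. S1 (mu H b b') (\<lambda>j. S1 (mu H c c') (\<lambda>k. \<Psi> i j k)))))"
  unfolding t3mul_S by (simp add: S3_vec2 S3_pure3)


lemma S3_vecS2: "S3 (\<lambda>i j k. S2 T (\<lambda>a b. F a b i j k)) \<Psi> = S2 T (\<lambda>a b. S3 (F a b) \<Psi>)"
  unfolding S3_prod S2_pair sum_distrib_left sum_distrib_right by (simp add: mult_ac) (rule sum.swap)
lemma S3_21: "S3 (\<lambda>i j k. M i j * x k) \<Psi> = S2 M (\<lambda>i j. S1 x (\<lambda>k. \<Psi> i j k))"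
  unfolding S3_def S2_def S1_def sum_distrib_left by (simp add: mult_ac)
lemma S3_12: "S3 (\<lambda>i j k. x i * M j k) \<Psi> = S1 x (\<lambda>i. S2 M (\<lambda>j k. \<Psi> i j k))"
  unfolding S3_def S2_def S1_def sum_distrib_left by (simp add: mult_ac)
lemma S3_13: "S3 (\<lambda>i j k. M i k * x j) \<Psi> = S2 M (\<lambda>i k. S1 x (\<lambda>j. \<Psi> i j k))"
proof -
  have "S3 (\<lambda>i j k. M i k * x j) \<Psi> = (\<Sum>i\<in>UNIV. \<Sum>j\<in>UNIV. \<Sum>k\<in>UNIV. M i k * (x j * \<Psi> i j k))"
    unfolding S3_def by (simp add: mult_ac)
  also have "\<dots> = (\<Sum>i\<in>UNIV. \<Sum>k\<in>UNIV. \<Sum>j\<in>UNIV. M i k * (x j * \<Psi> i j k))"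
    by (rule sum.cong[OF refl], rule sum.swap)
  finally show ?thesis unfolding S2_def S1_def sum_distrib_left .
qed
lemma S2_flip: "S2 (\<lambda>i j. T j i) \<Phi> = S2 T (\<lambda>j i. \<Phi> i j)"
  unfolding S2_def by (rule sum.swap)
lemma S1_swap2: "S1 x (\<lambda>i. S1 y (\<lambda>j. S1 z (\<lambda>k. F i j k))) = S1 z (\<lambda>k. S1 x (\<lambda>i. S1 y (\<lambda>j. F i j k)))"
proof -
  have "\<And>i. S1 y (\<lambda>j. S1 z (\<lambda>k. F i j k)) = S1 z (\<lambda>k. S1 y (\<lambda>j. F i j k))" by (rule S1_swap)
  then show ?thesis by (simp only: S1_swap[of x z])
qed

lemma bvec_sym: "bvec i j = bvec j i" by (simp add: bvec_def)

lemma tens3_l: "(\<lambda>i j k. \<Sum>m\<in>UNIV. X m k * D m i j) = (\<lambda>i j k. S2 X (\<lambda>m k'. D m i j * bvec k' k))"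
  unfolding S2_def bvec_def by (simp add: mult_ac)
lemma tens3_r: "(\<lambda>i j k. \<Sum>m\<in>UNIV. X i m * D m j k) = (\<lambda>i j k. S2 X (\<lambda>i' m. bvec i' i * D m j k))"
  unfolding S2_def bvec_def by (simp add: mult_ac)
lemma S3_tens3_l: "S3 (\<lambda>i j k. \<Sum>m\<in>UNIV. X m k * D m i j) \<Psi> = S2 X (\<lambda>m k. S2 (D m) (\<lambda>i j. \<Psi> i j k))"
  unfolding tens3_l S3_vecS2 S3_21 by simp
lemma S3_tens3_r: "S3 (\<lambda>i j k. \<Sum>m\<in>UNIV. X i m * D m j k) \<Psi> = S2 X (\<lambda>i m. S2 (D m) (\<lambda>j k. \<Psi> i j k))"
  unfolding tens3_r S3_vecS2 S3_12 by simp

lemma S1_vsmult: "S1 (vsmult c x) \<phi> = c * S1 x \<phi>"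
  unfolding vsmult_def by (rule S1_vecc)
lemma hcounit_S: "hcounit H x = S1 x (ep H)"
  unfolding hcounit_def S1_def ..
lemma mult_map_S: "S1 (mult_map H T) \<phi> = S2 T (\<lambda>i j. S1 (mu H i j) \<phi>)"
proof -
  have "mult_map H T = (\<lambda>l. S2 T (\<lambda>i j. mu H i j l))" unfolding mult_map_def S2_def by simp
  then show ?thesis by (simp add: S1_vec2)
qed

lemma S1_prod: "S1 x (\<lambda>i. S1 y (\<lambda>j. F i * G j)) = S1 x F * S1 y G"
proof -
  have "S1 x F * S1 y G = S1 x (\<lambda>i. F i * S1 y G)" by (rule S1_multc)
  also have "\<dots> = S1 x (\<lambda>i. S1 y (\<lambda>j. F i * G j))" by (simp only: S1_cmult)
  finally show ?thesis ..
qed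

lemma S1_prod3: "S1 x (\<lambda>i. S1 y (\<lambda>j. F i * G j * c)) = S1 x F * S1 y G * c"
  by (simp only: S1_multc[symmetric] S1_prod[symmetric])
lemma S1_cmult': "S1 x (\<lambda>i. c * F i) = c * S1 x F" by (rule S1_cmult[symmetric])
lemma S1_multc': "S1 x (\<lambda>i. F i * c) = S1 x F * c" by (rule S1_multc[symmetric])

lemma S1_sumvec: "S1 (\<lambda>l. \<Sum>c\<in>UNIV. F c l) \<phi> = (\<Sum>c\<in>UNIV. S1 (F c) \<phi>)"
  unfolding S1_def sum_distrib_right by (rule sum.swap)
lemma sum_S1_S2: "(\<Sum>c\<in>UNIV. S1 (T c) (\<lambda>w. G c w)) = S2 T G"
  unfolding S1_def S2_def ..

lemma S1_prod3b: "S1 x (\<lambda>i. S1 v (\<lambda>z. S1 (w z) (\<lambda>j. F i * G j))) = S1 x F * S1 v (\<lambda>z. S1 (w z) G)"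
proof -
  have "S1 x F * S1 v (\<lambda>z. S1 (w z) G) = S1 x (\<lambda>i. F i * S1 v (\<lambda>z. S1 (w z) G))" by (rule S1_multc)
  also have "\<dots> = S1 x (\<lambda>i. S1 v (\<lambda>z. S1 (w z) (\<lambda>j. F i * G j)))" by (simp only: S1_cmult)
  finally show ?thesis ..
qed

lemma S1_prod_sw: "S1 u (\<lambda>i. S1 v (\<lambda>j. F j * G i)) = S1 v F * S1 u G"
proof -
  have "S1 u (\<lambda>i. S1 v (\<lambda>j. F j * G i)) = S1 v (\<lambda>j. S1 u (\<lambda>i. F j * G i))" by (rule S1_swap)
  also have "\<dots> = S1 v F * S1 u G" by (rule S1_prod)
  finally show ?thesis .
qed



locale QT =
  fixes H :: "('i::finite, 'a::field) hopf_data" and R :: "'i \<Rightarrow> 'i \<Rightarrow> 'a"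
  assumes hopf: "hopf_algebra H" and qtr: "quasitriangular H R"
begin

abbreviation "\<mu> \<equiv> mu H"
abbreviation "\<delta> \<equiv> dl H"
abbreviation "\<eta> \<equiv> one H"
abbreviation "\<epsilon> \<equiv> ep H"
abbreviation "\<sigma> \<equiv> ant H"

lemma ax_assoc: "S1 (\<mu> a b) (\<lambda>m. S1 (\<mu> m c) \<phi>) = S1 (\<mu> b c) (\<lambda>m. S1 (\<mu> a m) \<phi>)"
proof -
  have "hmul H (hmul H (bvec a) (bvec b)) (bvec c) = hmul H (bvec a) (hmul H (bvec b) (bvec c))"
    using hopf unfolding hopf_algebra_def by blast
  then have "S1 (hmul H (hmul H (bvec a) (bvec b)) (bvec c)) \<phi> = S1 (hmul H (bvec a) (hmul H (bvec b) (bvec c))) \<phi>" by simp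
  then show ?thesis by (simp add: S1_hmul)
qed

lemma ax_unitL: "S1 \<eta> (\<lambda>a. S1 (\<mu> a b) \<phi>) = \<phi> b"
proof -
  have "hmul H \<eta> (bvec b) = bvec b" using hopf unfolding hopf_algebra_def by blast
  then have "S1 (hmul H \<eta> (bvec b)) \<phi> = S1 (bvec b) \<phi>" by simp
  then show ?thesis by (simp add: S1_hmul)
qed

lemma ax_unitR: "S1 \<eta> (\<lambda>b. S1 (\<mu> a b) \<phi>) = \<phi> a"
proof -
  have "hmul H (bvec a) \<eta> = bvec a" using hopf unfolding hopf_algebra_def by blast
  then have "S1 (hmul H (bvec a) \<eta>) \<phi> = S1 (bvec a) \<phi>" by simp
  then show ?thesis by (simp add: S1_hmul)
qed

lemma hcomul_bvec: "hcomul H (bvec l) = \<delta> l"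
  by (simp add: hcomul_S)

lemma ax_coassoc: "S2 (\<delta> l) (\<lambda>m k. S2 (\<delta> m) (\<lambda>i j. \<Psi> i j k)) = S2 (\<delta> l) (\<lambda>i m. S2 (\<delta> m) (\<lambda>j k. \<Psi> i j k))"
proof -
  have "\<forall>i j k. (\<Sum>m\<in>UNIV. hcomul H (bvec l) m k * \<delta> m i j) = (\<Sum>m\<in>UNIV. hcomul H (bvec l) i m * \<delta> m j k)"
    using hopf unfolding hopf_algebra_def by blast
  then have "(\<lambda>i j k. \<Sum>m\<in>UNIV. \<delta> l m k * \<delta> m i j) = (\<lambda>i j k. \<Sum>m\<in>UNIV. \<delta> l i m * \<delta> m j k)"
    by (simp add: hcomul_bvec)
  then have "S3 (\<lambda>i j k. \<Sum>m\<in>UNIV. \<delta> l m k * \<delta> m i j) \<Psi> = S3 (\<lambda>i j k. \<Sum>m\<in>UNIV. \<delta> l i m * \<delta> m j k) \<Psi>" by simp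
  then show ?thesis by (simp only: S3_tens3_l S3_tens3_r)
qed

lemma ax_counitL: "S2 (\<delta> l) (\<lambda>i j. \<epsilon> i * \<phi> j) = \<phi> l"
proof -
  have "\<forall>j. (\<Sum>i\<in>UNIV. \<epsilon> i * hcomul H (bvec l) i j) = bvec l j"
    using hopf unfolding hopf_algebra_def by blast
  then have "\<And>j. (\<Sum>i\<in>UNIV. \<epsilon> i * \<delta> l i j) = bvec l j" by (simp add: hcomul_bvec)
  then have "(\<Sum>j\<in>UNIV. (\<Sum>i\<in>UNIV. \<epsilon> i * \<delta> l i j) * \<phi> j) = (\<Sum>j\<in>UNIV. bvec l j * \<phi> j)" by simp
  then have "(\<Sum>j\<in>UNIV. (\<Sum>i\<in>UNIV. \<epsilon> i * \<delta> l i j) * \<phi> j) = \<phi> l" by (simp add: bvec_def)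
  moreover have "S2 (\<delta> l) (\<lambda>i j. \<epsilon> i * \<phi> j) = (\<Sum>j\<in>UNIV. (\<Sum>i\<in>UNIV. \<epsilon> i * \<delta> l i j) * \<phi> j)"
    unfolding S2_def sum_distrib_right by (subst sum.swap) (simp add: mult_ac)
  ultimately show ?thesis by simp
qed

lemma ax_counitR: "S2 (\<delta> l) (\<lambda>i j. \<phi> i * \<epsilon> j) = \<phi> l"
proof -
  have "\<forall>i. (\<Sum>j\<in>UNIV. hcomul H (bvec l) i j * \<epsilon> j) = bvec l i"
    using hopf unfolding hopf_algebra_def by blast
  then have "\<And>i. (\<Sum>j\<in>UNIV. \<delta> l i j * \<epsilon> j) = bvec l i" by (simp add: hcomul_bvec)
  then have "(\<Sum>i\<in>UNIV. \<phi> i * (\<Sum>j\<in>UNIV. \<delta> l i j * \<epsilon> j)) = (\<Sum>i\<in>UNIV. \<phi> i * bvec l i)" by simp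
  then have "(\<Sum>i\<in>UNIV. \<phi> i * (\<Sum>j\<in>UNIV. \<delta> l i j * \<epsilon> j)) = \<phi> l" by (simp add: bvec_def)
  moreover have "S2 (\<delta> l) (\<lambda>i j. \<phi> i * \<epsilon> j) = (\<Sum>i\<in>UNIV. \<phi> i * (\<Sum>j\<in>UNIV. \<delta> l i j * \<epsilon> j))"
    unfolding S2_def sum_distrib_left by (simp add: mult_ac)
  ultimately show ?thesis by simp
qed


definition Ri where "Ri = (SOME Ri. tmul H R Ri = tone H \<and> tmul H Ri R = tone H)"
lemma Ri_prop: "tmul H R Ri = tone H \<and> tmul H Ri R = tone H"
proof -
  have "\<exists>Ri. tmul H R Ri = tone H \<and> tmul H Ri R = tone H" using qtr unfolding quasitriangular_def by blast
  then show ?thesis unfolding Ri_def by (rule someI_ex)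
qed

lemma S2_tone: "S2 (tone H) \<Phi> = S1 \<eta> (\<lambda>i. S1 \<eta> (\<lambda>j. \<Phi> i j))"
  unfolding tone_def by (rule S2_pure)

lemma ax_RRi: "S2 R (\<lambda>a b. S2 Ri (\<lambda>c d. S1 (\<mu> a c) (\<lambda>i. S1 (\<mu> b d) (\<lambda>j. \<Phi> i j)))) = S1 \<eta> (\<lambda>i. S1 \<eta> (\<lambda>j. \<Phi> i j))"
proof -
  have "S2 (tmul H R Ri) \<Phi> = S2 (tone H) \<Phi>" using Ri_prop by simp
  then show ?thesis by (simp only: S2_tmul S2_tone)
qed
lemma ax_RiR: "S2 Ri (\<lambda>a b. S2 R (\<lambda>c d. S1 (\<mu> a c) (\<lambda>i. S1 (\<mu> b d) (\<lambda>j. \<Phi> i j)))) = S1 \<eta> (\<lambda>i. S1 \<eta> (\<lambda>j. \<Phi> i j))"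
proof -
  have "S2 (tmul H Ri R) \<Phi> = S2 (tone H) \<Phi>" using Ri_prop by simp
  then show ?thesis by (simp only: S2_tmul S2_tone)
qed

lemma ax_comm: "S2 (\<delta> l) (\<lambda>b a. S2 R (\<lambda>c d. S1 (\<mu> a c) (\<lambda>i. S1 (\<mu> b d) (\<lambda>j. \<Phi> i j))))
   = S2 R (\<lambda>a b. S2 (\<delta> l) (\<lambda>c d. S1 (\<mu> a c) (\<lambda>i. S1 (\<mu> b d) (\<lambda>j. \<Phi> i j))))"
proof -
  have "tmul H (\<lambda>i j. hcomul H (bvec l) j i) R = tmul H R (hcomul H (bvec l))"
    using qtr unfolding quasitriangular_def by blast
  then have "S2 (tmul H (\<lambda>i j. \<delta> l j i) R) \<Phi> = S2 (tmul H R (\<delta> l)) \<Phi>" by (simp add: hcomul_bvec)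
  then show ?thesis by (simp only: S2_tmul S2_flip[of "\<delta> l"])
qed

lemma unit_elim1: "S1 \<eta> (\<lambda>c'. S1 x (\<lambda>i. S1 y (\<lambda>j. S1 (\<mu> c c') (\<lambda>k. \<Psi> i j k)))) = S1 x (\<lambda>i. S1 y (\<lambda>j. \<Psi> i j c))"
  by (simp only: S1_swap[of \<eta> x] S1_swap[of \<eta> y] ax_unitR)
lemma unit_elim2: "S1 \<eta> (\<lambda>b. S1 x (\<lambda>i. S1 (\<mu> b b') (\<lambda>j. \<Psi> i j))) = S1 x (\<lambda>i. \<Psi> i b')"
  by (simp only: S1_swap[of \<eta> x] ax_unitL)

lemma ax_R1: "S2 R (\<lambda>m k. S2 (\<delta> m) (\<lambda>i j. \<Psi> i j k)) = S2 R (\<lambda>i c. S2 R (\<lambda>j c'. S1 (\<mu> c c') (\<lambda>k. \<Psi> i j k)))"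
proof -
  have "(\<lambda>i j k. \<Sum>m\<in>UNIV. R m k * \<delta> m i j) = t3mul H (\<lambda>i j k. R i k * \<eta> j) (\<lambda>i j k. \<eta> i * R j k)"
    using qtr unfolding quasitriangular_def by blast
  then have "S3 (\<lambda>i j k. \<Sum>m\<in>UNIV. R m k * \<delta> m i j) \<Psi> = S3 (t3mul H (\<lambda>i j k. R i k * \<eta> j) (\<lambda>i j k. \<eta> i * R j k)) \<Psi>" by simp
  then show ?thesis by (simp add: S3_tens3_l S3_t3mul S3_13 S3_12 S1S2_swap ax_unitR ax_unitL)
qed

lemma ax_R2: "S2 R (\<lambda>i m. S2 (\<delta> m) (\<lambda>j k. \<Psi> i j k)) = S2 R (\<lambda>a k. S2 R (\<lambda>a' j. S1 (\<mu> a a') (\<lambda>i. \<Psi> i j k)))"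
proof -
  have "(\<lambda>i j k. \<Sum>m\<in>UNIV. R i m * \<delta> m j k) = t3mul H (\<lambda>i j k. R i k * \<eta> j) (\<lambda>i j k. R i j * \<eta> k)"
    using qtr unfolding quasitriangular_def by blast
  then have "S3 (\<lambda>i j k. \<Sum>m\<in>UNIV. R i m * \<delta> m j k) \<Psi> = S3 (t3mul H (\<lambda>i j k. R i k * \<eta> j) (\<lambda>i j k. R i j * \<eta> k)) \<Psi>" by simp
  then show ?thesis by (simp add: S3_tens3_r S3_t3mul S3_13 S3_21 S1S2_swap unit_elim1 unit_elim2)
qed


lemma ax_Dmult: "S1 (\<mu> a c) (\<lambda>l. S2 (\<delta> l) \<Phi>) = S2 (\<delta> a) (\<lambda>p q. S2 (\<delta> c) (\<lambda>r s. S1 (\<mu> p r) (\<lambda>i. S1 (\<mu> q s) (\<lambda>j. \<Phi> i j))))"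
proof -
  have "hcomul H (hmul H (bvec a) (bvec c)) = tmul H (hcomul H (bvec a)) (hcomul H (bvec c))"
    using hopf unfolding hopf_algebra_def by blast
  then have "S2 (hcomul H (hmul H (bvec a) (bvec c))) \<Phi> = S2 (tmul H (\<delta> a) (\<delta> c)) \<Phi>" by (simp add: hcomul_bvec)
  then show ?thesis by (simp only: S2_hcomul S1_hmul S1_bvec S2_tmul)
qed

lemma ax_Dunit: "S1 \<eta> (\<lambda>l. S2 (\<delta> l) \<Phi>) = S1 \<eta> (\<lambda>i. S1 \<eta> (\<lambda>j. \<Phi> i j))"
proof -
  have "hcomul H \<eta> = tone H" using hopf unfolding hopf_algebra_def by blast
  then have "S2 (hcomul H \<eta>) \<Phi> = S2 (tone H) \<Phi>" by simp
  then show ?thesis by (simp only: S2_hcomul S2_tone)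
qed

lemma ax_emult: "S1 (\<mu> a b) \<epsilon> = \<epsilon> a * \<epsilon> b"
proof -
  have "hcounit H (hmul H (bvec a) (bvec b)) = hcounit H (bvec a) * hcounit H (bvec b)"
    using hopf unfolding hopf_algebra_def by blast
  then show ?thesis by (simp add: hcounit_S S1_hmul)
qed

lemma ax_eunit: "S1 \<eta> \<epsilon> = 1"
proof -
  have "hcounit H \<eta> = 1" using hopf unfolding hopf_algebra_def by blast
  then show ?thesis by (simp add: hcounit_S)
qed

lemma ax_antipL: "S2 (\<delta> l) (\<lambda>i b. S1 (\<sigma> i) (\<lambda>a. S1 (\<mu> a b) \<phi>)) = \<epsilon> l * S1 \<eta> \<phi>"
proof -
  have "mult_map H (\<lambda>a b. \<Sum>i\<in>UNIV. hcomul H (bvec l) i b * \<sigma> i a) = vsmult (hcounit H (bvec l)) \<eta>"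
    using hopf unfolding hopf_algebra_def by blast
  moreover have "(\<lambda>a b. \<Sum>i\<in>UNIV. hcomul H (bvec l) i b * \<sigma> i a) = (\<lambda>a b. S2 (\<delta> l) (\<lambda>i b'. \<sigma> i a * bvec b' b))"
    unfolding hcomul_bvec by (simp add: S2_def bvec_def mult_ac)
  ultimately have "S1 (mult_map H (\<lambda>a b. S2 (\<delta> l) (\<lambda>i b'. \<sigma> i a * bvec b' b))) \<phi> = S1 (vsmult (hcounit H (bvec l)) \<eta>) \<phi>" by simp
  then show ?thesis by (simp add: mult_map_S S2_vec2 S2_pure S1_vsmult hcounit_S)
qed

lemma ax_antipR: "S2 (\<delta> l) (\<lambda>a j. S1 (\<sigma> j) (\<lambda>b. S1 (\<mu> a b) \<phi>)) = \<epsilon> l * S1 \<eta> \<phi>"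
proof -
  have "mult_map H (\<lambda>a b. \<Sum>j\<in>UNIV. hcomul H (bvec l) a j * \<sigma> j b) = vsmult (hcounit H (bvec l)) \<eta>"
    using hopf unfolding hopf_algebra_def by blast
  moreover have "(\<lambda>a b. \<Sum>j\<in>UNIV. hcomul H (bvec l) a j * \<sigma> j b) = (\<lambda>a b. S2 (\<delta> l) (\<lambda>a' j. bvec a' a * \<sigma> j b))"
    unfolding hcomul_bvec by (simp add: S2_def bvec_def mult_ac)
  ultimately have "S1 (mult_map H (\<lambda>a b. S2 (\<delta> l) (\<lambda>a' j. bvec a' a * \<sigma> j b))) \<phi> = S1 (vsmult (hcounit H (bvec l)) \<eta>) \<phi>" by simp
  then show ?thesis by (simp add: mult_map_S S2_vec2 S2_pure S1_vsmult hcounit_S)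
qed


lemma swap_mu3: "S1 x (\<lambda>k. S1 y (\<lambda>z. S1 (\<mu> k d) (\<lambda>w. F z w))) = S1 y (\<lambda>z. S1 x (\<lambda>k. S1 (\<mu> k d) (\<lambda>w. F z w)))"
  by (rule S1_swap)

lemma D1_aux: "S1 \<eta> (\<lambda>x. S1 \<eta> (\<lambda>y. \<Phi> x y)) = S2 R (\<lambda>i c. \<epsilon> i * S1 \<eta> (\<lambda>x. \<Phi> x c))"
proof -
  define \<psi> where "\<psi> = (\<lambda>j k. S2 Ri (\<lambda>c d. S1 (\<mu> j c) (\<lambda>x. S1 (\<mu> k d) (\<lambda>y. \<Phi> x y))))"
  have "S1 \<eta> (\<lambda>x. S1 \<eta> (\<lambda>y. \<Phi> x y)) = S2 R \<psi>"
    unfolding \<psi>_def by (rule ax_RRi[symmetric])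
  also have "\<dots> = S2 R (\<lambda>m k. S2 (\<delta> m) (\<lambda>i j. \<epsilon> i * \<psi> j k))"
    by (simp only: ax_counitL)
  also have "\<dots> = S2 R (\<lambda>i c. S2 R (\<lambda>j c'. S1 (\<mu> c c') (\<lambda>k. \<epsilon> i * \<psi> j k)))"
    by (rule ax_R1)
  also have "\<dots> = S2 R (\<lambda>i c. \<epsilon> i * S2 R (\<lambda>j c'. S2 Ri (\<lambda>c'' d. S1 (\<mu> j c'') (\<lambda>x. S1 (\<mu> c c') (\<lambda>k. S1 (\<mu> k d) (\<lambda>y. \<Phi> x y))))))"
    unfolding \<psi>_def by (simp only: S1_cmult[symmetric] S2_cmult[symmetric] S1S2_swap swap_mu3)
  also have "\<dots> = S2 R (\<lambda>i c. \<epsilon> i * S2 R (\<lambda>j c'. S2 Ri (\<lambda>c'' d. S1 (\<mu> j c'') (\<lambda>x. S1 (\<mu> c' d) (\<lambda>k. S1 (\<mu> c k) (\<lambda>y. \<Phi> x y))))))"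
    by (simp only: ax_assoc)
  also have "\<dots> = S2 R (\<lambda>i c. \<epsilon> i * S1 \<eta> (\<lambda>x. S1 \<eta> (\<lambda>k. S1 (\<mu> c k) (\<lambda>y. \<Phi> x y))))"
    by (simp only: ax_RRi)
  also have "\<dots> = S2 R (\<lambda>i c. \<epsilon> i * S1 \<eta> (\<lambda>x. \<Phi> x c))"
    by (simp only: ax_unitR)
  finally show ?thesis .
qed

lemma D1: "S2 R (\<lambda>a b. \<epsilon> a * \<phi> b) = S1 \<eta> \<phi>"
proof -
  have "S1 \<eta> (\<lambda>x. S1 \<eta> (\<lambda>y. \<epsilon> x * \<phi> y)) = S2 R (\<lambda>i c. \<epsilon> i * S1 \<eta> (\<lambda>x. \<epsilon> x * \<phi> c))"
    by (rule D1_aux)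
  then show ?thesis by (simp add: S1_cmult[symmetric] S1_multc[symmetric] ax_eunit)
qed


lemma D2_aux: "S1 \<eta> (\<lambda>x. S1 \<eta> (\<lambda>y. \<Phi> x y)) = S2 R (\<lambda>a' j. \<epsilon> j * S1 \<eta> (\<lambda>y. \<Phi> a' y))"
proof -
  define \<psi> where "\<psi> = (\<lambda>i k. S2 Ri (\<lambda>a b. S1 (\<mu> a i) (\<lambda>x. S1 (\<mu> b k) (\<lambda>y. \<Phi> x y))))"
  have "S1 \<eta> (\<lambda>x. S1 \<eta> (\<lambda>y. \<Phi> x y)) = S2 Ri (\<lambda>a b. S2 R (\<lambda>c d. S1 (\<mu> a c) (\<lambda>x. S1 (\<mu> b d) (\<lambda>y. \<Phi> x y))))"
    by (rule ax_RiR[symmetric])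
  also have "\<dots> = S2 R \<psi>"
    unfolding \<psi>_def by (rule S2_swap)
  also have "\<dots> = S2 R (\<lambda>i m. S2 (\<delta> m) (\<lambda>j k. \<epsilon> j * \<psi> i k))"
    by (simp only: ax_counitL)
  also have "\<dots> = S2 R (\<lambda>a k. S2 R (\<lambda>a' j. S1 (\<mu> a a') (\<lambda>i. \<epsilon> j * \<psi> i k)))"
    by (rule ax_R2)
  also have "\<dots> = S2 R (\<lambda>a k. S2 R (\<lambda>a' j. \<epsilon> j * S2 Ri (\<lambda>c d. S1 (\<mu> a a') (\<lambda>i. S1 (\<mu> c i) (\<lambda>x. S1 (\<mu> d k) (\<lambda>y. \<Phi> x y))))))"
    unfolding \<psi>_def by (simp only: S1_cmult[symmetric] S2_cmult[symmetric] S1S2_swap)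
  also have "\<dots> = S2 R (\<lambda>a k. S2 R (\<lambda>a' j. \<epsilon> j * S2 Ri (\<lambda>c d. S1 (\<mu> c a) (\<lambda>z. S1 (\<mu> z a') (\<lambda>x. S1 (\<mu> d k) (\<lambda>y. \<Phi> x y))))))"
    by (simp only: ax_assoc)
  also have "\<dots> = S2 R (\<lambda>a k. S2 R (\<lambda>a' j. \<epsilon> j * S2 Ri (\<lambda>c d. S1 (\<mu> c a) (\<lambda>z. S1 (\<mu> d k) (\<lambda>y. S1 (\<mu> z a') (\<lambda>x. \<Phi> x y))))))"
    by (subst (2) S1_swap) (rule refl)
  also have "\<dots> = S2 R (\<lambda>a' j. S2 R (\<lambda>a k. \<epsilon> j * S2 Ri (\<lambda>c d. S1 (\<mu> c a) (\<lambda>z. S1 (\<mu> d k) (\<lambda>y. S1 (\<mu> z a') (\<lambda>x. \<Phi> x y))))))"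
    by (subst S2_swap) (rule refl)
  also have "\<dots> = S2 R (\<lambda>a' j. \<epsilon> j * S2 R (\<lambda>a k. S2 Ri (\<lambda>c d. S1 (\<mu> c a) (\<lambda>z. S1 (\<mu> d k) (\<lambda>y. S1 (\<mu> z a') (\<lambda>x. \<Phi> x y))))))"
    by (simp only: S2_cmult)
  also have "\<dots> = S2 R (\<lambda>a' j. \<epsilon> j * S2 Ri (\<lambda>c d. S2 R (\<lambda>a k. S1 (\<mu> c a) (\<lambda>z. S1 (\<mu> d k) (\<lambda>y. S1 (\<mu> z a') (\<lambda>x. \<Phi> x y))))))"
    by (subst (2) S2_swap) (rule refl)
  also have "\<dots> = S2 R (\<lambda>a' j. \<epsilon> j * S1 \<eta> (\<lambda>z. S1 \<eta> (\<lambda>y. S1 (\<mu> z a') (\<lambda>x. \<Phi> x y))))"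
    by (simp only: ax_RiR)
  also have "\<dots> = S2 R (\<lambda>a' j. \<epsilon> j * S1 \<eta> (\<lambda>y. \<Phi> a' y))"
    by (subst S1_swap) (simp only: ax_unitL)
  finally show ?thesis .
qed

lemma D2: "S2 R (\<lambda>a b. \<phi> a * \<epsilon> b) = S1 \<eta> \<phi>"
proof -
  have "S1 \<eta> (\<lambda>x. S1 \<eta> (\<lambda>y. \<phi> x * \<epsilon> y)) = S2 R (\<lambda>a' j. \<epsilon> j * S1 \<eta> (\<lambda>y. \<phi> a' * \<epsilon> y))"
    by (rule D2_aux)
  then show ?thesis by (simp add: S1_cmult[symmetric] S1_multc[symmetric] ax_eunit mult.commute)
qed


abbreviation "fQ \<equiv> drinfeld H R"

lemma f_S: "S1 (fQ p) \<phi> = S2 R (\<lambda>b a. S2 R (\<lambda>c d. S1 (\<mu> a c) (\<lambda>i. S1 (\<mu> b d) (\<lambda>j. p i * \<phi> j))))"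
proof -
  have "S1 (fQ p) \<phi> = S2 (Qel H R) (\<lambda>i j. p i * \<phi> j)"
    unfolding drinfeld_def S1_def S2_def sum_distrib_right sum_distrib_left
    by (subst sum.swap) (simp add: mult_ac)
  then show ?thesis unfolding Qel_def by (simp only: S2_tmul S2_flip[of R])
qed

lemma E5: "fQ \<epsilon> = \<eta>"
proof (rule vec_eqI)
  fix \<phi>
  have "S1 (fQ \<epsilon>) \<phi> = S2 R (\<lambda>b a. S2 R (\<lambda>c d. S1 (\<mu> a c) \<epsilon> * S1 (\<mu> b d) \<phi>))"
    by (simp only: f_S S1_prod)
  also have "\<dots> = S2 R (\<lambda>b a. S2 R (\<lambda>c d. \<epsilon> c * (S1 (\<mu> b d) \<phi> * \<epsilon> a)))"
    by (simp only: ax_emult mult_ac)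
  also have "\<dots> = S2 R (\<lambda>b a. S1 \<eta> (\<lambda>d. S1 (\<mu> b d) \<phi>) * \<epsilon> a)"
    by (simp only: D1 S1_multc)
  also have "\<dots> = S1 \<eta> \<phi>"
    by (simp only: ax_unitR D2)
  finally show "S1 (fQ \<epsilon>) \<phi> = S1 \<eta> \<phi>" .
qed

lemma N: "S2 R (\<lambda>u1 u2. S2 R (\<lambda>x1 x2. S1 (\<mu> u1 x1) (\<lambda>i. S1 (\<sigma> x2) (\<lambda>z. S1 (\<mu> z u2) (\<lambda>j. \<Phi> i j)))))
   = S1 \<eta> (\<lambda>i. S1 \<eta> (\<lambda>j. \<Phi> i j))"
proof -
  have "S2 R (\<lambda>u1 u2. S2 R (\<lambda>x1 x2. S1 (\<mu> u1 x1) (\<lambda>i. S1 (\<sigma> x2) (\<lambda>z. S1 (\<mu> z u2) (\<lambda>j. \<Phi> i j)))))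
     = S2 R (\<lambda>i m. S2 (\<delta> m) (\<lambda>j k. S1 (\<sigma> j) (\<lambda>z. S1 (\<mu> z k) (\<lambda>j'. \<Phi> i j'))))"
    by (rule ax_R2[symmetric])
  also have "\<dots> = S2 R (\<lambda>i m. S1 \<eta> (\<lambda>j'. \<Phi> i j') * \<epsilon> m)"
    by (simp only: ax_antipL mult.commute)
  also have "\<dots> = S1 \<eta> (\<lambda>i. S1 \<eta> (\<lambda>j. \<Phi> i j))"
    by (rule D2)
  finally show ?thesis .
qed


definition Gv :: "('i \<Rightarrow> 'a) \<Rightarrow> ('i \<Rightarrow> 'a) \<Rightarrow> 'i \<Rightarrow> 'a" where
  "Gv y q = (\<lambda>l. S2 R (\<lambda>a b. S2 R (\<lambda>c d. S1 (\<mu> b c) (\<lambda>z. q z * S1 y (\<lambda>k. S1 (\<mu> a k) (\<lambda>m. \<mu> m d l))))))"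

lemma Gv_S: "S1 (Gv y q) \<phi> = S2 R (\<lambda>a b. S2 R (\<lambda>c d. S1 (\<mu> b c) (\<lambda>z. q z * S1 y (\<lambda>k. S1 (\<mu> a k) (\<lambda>m. S1 (\<mu> m d) \<phi>)))))"
  unfolding Gv_def by (simp only: S1_vec2 S1_vec1 S1_vecc)

lemma dmul_S: "dmul H p q = (\<lambda>l. S2 (\<delta> l) (\<lambda>x y. p x * q y))"
  unfolding dmul_def S2_def by (simp add: mult_ac)

lemma E1: "fQ (dmul H p q) = Gv (fQ p) q"
proof (rule vec_eqI)
  fix \<phi>
  have "S1 (fQ (dmul H p q)) \<phi> = S2 R (\<lambda>b a. S2 R (\<lambda>c d. S1 (\<mu> a c) (\<lambda>i. S2 (\<delta> i) (\<lambda>x y. p x * q y * S1 (\<mu> b d) \<phi>))))"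
    unfolding f_S by (simp only: S1_cmult') (simp only: dmul_S S2_multc)
  also have "\<dots> = S2 R (\<lambda>b a. S2 R (\<lambda>c d. S2 (\<delta> a) (\<lambda>p' q'. S2 (\<delta> c) (\<lambda>r s. S1 (\<mu> p' r) (\<lambda>x. S1 (\<mu> q' s) (\<lambda>y. p x * q y * S1 (\<mu> b d) \<phi>))))))"
    by (simp only: ax_Dmult)
  also have "\<dots> = S2 R (\<lambda>b a. S2 (\<delta> a) (\<lambda>p' q'. S2 R (\<lambda>c d. S2 (\<delta> c) (\<lambda>r s. S1 (\<mu> p' r) (\<lambda>x. S1 (\<mu> q' s) (\<lambda>y. p x * q y * S1 (\<mu> b d) \<phi>))))))"
    by (subst (2) S2_swap) (rule refl)
  also have "\<dots> = S2 R (\<lambda>a1 k1. S2 R (\<lambda>a1' p'. S1 (\<mu> a1 a1') (\<lambda>b. S2 R (\<lambda>c d. S2 (\<delta> c) (\<lambda>r s. S1 (\<mu> p' r) (\<lambda>x. S1 (\<mu> k1 s) (\<lambda>y. p x * q y * S1 (\<mu> b d) \<phi>)))))))"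
    by (rule ax_R2)
  also have "\<dots> = S2 R (\<lambda>a1 k1. S2 R (\<lambda>a1' p'. S1 (\<mu> a1 a1') (\<lambda>b. S2 R (\<lambda>r c. S2 R (\<lambda>s c'. S1 (\<mu> c c') (\<lambda>d. S1 (\<mu> p' r) (\<lambda>x. S1 (\<mu> k1 s) (\<lambda>y. p x * q y * S1 (\<mu> b d) \<phi>))))))))"
    by (simp only: ax_R1)
  also have "\<dots> = S2 R (\<lambda>a1 k1. S2 R (\<lambda>a1' p'. S2 R (\<lambda>r c. S2 R (\<lambda>s c'. S1 (\<mu> p' r) p * S1 (\<mu> k1 s) q * S1 (\<mu> a1 a1') (\<lambda>b. S1 (\<mu> c c') (\<lambda>d. S1 (\<mu> b d) \<phi>))))))"
    by (simp only: S1S2_swap S1_prod3 S1_cmult')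
  also have "\<dots> = S2 R (\<lambda>a1 k1. S2 R (\<lambda>a1' p'. S2 R (\<lambda>r c. S2 R (\<lambda>s c'. S1 (\<mu> p' r) p * S1 (\<mu> k1 s) q * S1 (\<mu> c c') (\<lambda>d. S1 (\<mu> a1 a1') (\<lambda>b. S1 (\<mu> b d) \<phi>))))))"
    by (subst S1_swap) (rule refl)
  also have "\<dots> = S2 R (\<lambda>a1 k1. S2 R (\<lambda>a1' p'. S2 R (\<lambda>r c. S2 R (\<lambda>s c'. S1 (\<mu> p' r) p * S1 (\<mu> k1 s) q * S1 (\<mu> c c') (\<lambda>d. S1 (\<mu> a1' d) (\<lambda>m. S1 (\<mu> a1 m) \<phi>))))))"
    by (simp only: ax_assoc)
  finally have L: "S1 (fQ (dmul H p q)) \<phi> = \<dots>" .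
  have "S1 (Gv (fQ p) q) \<phi> = S2 R (\<lambda>a b. S2 R (\<lambda>c d. S2 R (\<lambda>b' a'. S2 R (\<lambda>c' d'. S1 (\<mu> b c) q * (S1 (\<mu> a' c') p * S1 (\<mu> b' d') (\<lambda>j. S1 (\<mu> a j) (\<lambda>m. S1 (\<mu> m d) \<phi>)))))))"
    by (simp only: Gv_S f_S S1_cmult' S1_multc' S2_cmult S1S2_swap)
  also have "\<dots> = S2 R (\<lambda>a b. S2 R (\<lambda>b' a'. S2 R (\<lambda>c d. S2 R (\<lambda>c' d'. S1 (\<mu> b c) q * (S1 (\<mu> a' c') p * S1 (\<mu> b' d') (\<lambda>j. S1 (\<mu> a j) (\<lambda>m. S1 (\<mu> m d) \<phi>)))))))"
    by (subst (2) S2_swap) (rule refl)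
  also have "\<dots> = S2 R (\<lambda>a b. S2 R (\<lambda>b' a'. S2 R (\<lambda>c' d'. S2 R (\<lambda>c d. S1 (\<mu> b c) q * (S1 (\<mu> a' c') p * S1 (\<mu> b' d') (\<lambda>j. S1 (\<mu> a j) (\<lambda>m. S1 (\<mu> m d) \<phi>)))))))"
    by (subst (3) S2_swap) (rule refl)
  also have "\<dots> = S2 R (\<lambda>a b. S2 R (\<lambda>b' a'. S2 R (\<lambda>c' d'. S2 R (\<lambda>c d. S1 (\<mu> b c) q * (S1 (\<mu> a' c') p * S1 (\<mu> d' d) (\<lambda>n. S1 (\<mu> b' n) (\<lambda>m. S1 (\<mu> a m) \<phi>)))))))"
    by (simp only: ax_assoc)
  finally have Rr: "S1 (Gv (fQ p) q) \<phi> = \<dots>" .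
  show "S1 (fQ (dmul H p q)) \<phi> = S1 (Gv (fQ p) q) \<phi>"
    unfolding L Rr by (simp only: mult_ac)
qed


lemma ad_S: "S1 (ad H h y) \<phi> = S1 h (\<lambda>w. S2 (\<delta> w) (\<lambda>i j. S1 y (\<lambda>k. S1 (\<mu> i k) (\<lambda>m. S1 (\<sigma> j) (\<lambda>n. S1 (\<mu> m n) \<phi>)))))"
proof -
  have "ad H h y = (\<lambda>l. S2 (hcomul H h) (\<lambda>i j. hmul H (hmul H (bvec i) y) (hS H (bvec j)) l))"
    unfolding ad_def S2_def ..
  then have "S1 (ad H h y) \<phi> = S2 (hcomul H h) (\<lambda>i j. S1 (hmul H (hmul H (bvec i) y) (hS H (bvec j))) \<phi>)"
    by (simp only: S1_vec2)
  then show ?thesis by (simp only: S2_hcomul S1_hmul S1_hS S1_bvec)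
qed

lemma assoc4: "S1 (\<mu> x1 s1) (\<lambda>c. S1 (\<mu> b c1) (\<lambda>z. S1 (\<mu> z c) q)) = S1 (\<mu> c1 x1) (\<lambda>i. S1 (\<mu> b i) (\<lambda>t. S1 (\<mu> t s1) q))"
proof -
  have "S1 (\<mu> x1 s1) (\<lambda>c. S1 (\<mu> b c1) (\<lambda>z. S1 (\<mu> z c) q)) = S1 (\<mu> b c1) (\<lambda>z. S1 (\<mu> x1 s1) (\<lambda>c. S1 (\<mu> z c) q))"
    by (rule S1_swap)
  also have "\<dots> = S1 (\<mu> b c1) (\<lambda>z. S1 (\<mu> z x1) (\<lambda>c. S1 (\<mu> c s1) q))"
    by (simp only: ax_assoc)
  also have "\<dots> = S1 (\<mu> c1 x1) (\<lambda>i. S1 (\<mu> b i) (\<lambda>t. S1 (\<mu> t s1) q))"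
    by (rule ax_assoc)
  finally show ?thesis .
qed

lemma GL: "S1 u (\<lambda>m. S1 v (\<lambda>n. S1 (\<mu> m n) (\<lambda>k. S1 (\<mu> a k) (\<lambda>m'. S1 (\<mu> m' d) \<phi>))))
  = S1 v (\<lambda>n. S1 (\<mu> n d) (\<lambda>j. S1 u (\<lambda>m. S1 (\<mu> m j) (\<lambda>k. S1 (\<mu> a k) \<phi>))))"
proof -
  have "S1 u (\<lambda>m. S1 v (\<lambda>n. S1 (\<mu> m n) (\<lambda>k. S1 (\<mu> a k) (\<lambda>m'. S1 (\<mu> m' d) \<phi>))))
     = S1 u (\<lambda>m. S1 v (\<lambda>n. S1 (\<mu> n d) (\<lambda>j. S1 (\<mu> m j) (\<lambda>k. S1 (\<mu> a k) \<phi>))))"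
    by (simp only: ax_assoc)
  also have "\<dots> = S1 v (\<lambda>n. S1 u (\<lambda>m. S1 (\<mu> n d) (\<lambda>j. S1 (\<mu> m j) (\<lambda>k. S1 (\<mu> a k) \<phi>))))"
    by (rule S1_swap)
  also have "\<dots> = S1 v (\<lambda>n. S1 (\<mu> n d) (\<lambda>j. S1 u (\<lambda>m. S1 (\<mu> m j) (\<lambda>k. S1 (\<mu> a k) \<phi>))))"
    by (subst S1_swap) (rule refl)
  finally show ?thesis .
qed

lemma GL': "S1 y (\<lambda>k. S1 (\<mu> s2 k) (\<lambda>m. S1 (\<sigma> x2) (\<lambda>n. S1 (\<mu> m n) (\<lambda>k'. S1 (\<mu> a k') (\<lambda>m'. S1 (\<mu> m' d) \<phi>)))))
  = S1 (\<sigma> x2) (\<lambda>z. S1 (\<mu> z d) (\<lambda>j. S1 y (\<lambda>k. S1 (\<mu> s2 k) (\<lambda>m. S1 (\<mu> m j) (\<lambda>k'. S1 (\<mu> a k') \<phi>)))))"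
proof -
  have "S1 y (\<lambda>k. S1 (\<mu> s2 k) (\<lambda>m. S1 (\<sigma> x2) (\<lambda>n. S1 (\<mu> m n) (\<lambda>k'. S1 (\<mu> a k') (\<lambda>m'. S1 (\<mu> m' d) \<phi>)))))
     = S1 y (\<lambda>k. S1 (\<sigma> x2) (\<lambda>z. S1 (\<mu> z d) (\<lambda>j. S1 (\<mu> s2 k) (\<lambda>m. S1 (\<mu> m j) (\<lambda>k'. S1 (\<mu> a k') \<phi>)))))"
    by (simp only: GL)
  also have "\<dots> = S1 (\<sigma> x2) (\<lambda>z. S1 y (\<lambda>k. S1 (\<mu> z d) (\<lambda>j. S1 (\<mu> s2 k) (\<lambda>m. S1 (\<mu> m j) (\<lambda>k'. S1 (\<mu> a k') \<phi>)))))"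
    by (rule S1_swap)
  also have "\<dots> = S1 (\<sigma> x2) (\<lambda>z. S1 (\<mu> z d) (\<lambda>j. S1 y (\<lambda>k. S1 (\<mu> s2 k) (\<lambda>m. S1 (\<mu> m j) (\<lambda>k'. S1 (\<mu> a k') \<phi>)))))"
    by (subst S1_swap) (rule refl)
  finally show ?thesis .
qed


lemma unit3: "S1 \<eta> (\<lambda>j. S1 x (\<lambda>k. S1 (v k) (\<lambda>m. S1 (\<mu> m j) F))) = S1 x (\<lambda>k. S1 (v k) (\<lambda>m. F m))"
proof -
  have "S1 \<eta> (\<lambda>j. S1 x (\<lambda>k. S1 (v k) (\<lambda>m. S1 (\<mu> m j) F))) = S1 x (\<lambda>k. S1 \<eta> (\<lambda>j. S1 (v k) (\<lambda>m. S1 (\<mu> m j) F)))"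
    by (rule S1_swap)
  also have "\<dots> = S1 x (\<lambda>k. S1 (v k) (\<lambda>m. S1 \<eta> (\<lambda>j. S1 (\<mu> m j) F)))"
    by (subst S1_swap) (rule refl)
  also have "\<dots> = S1 x (\<lambda>k. S1 (v k) (\<lambda>m. F m))"
    by (simp only: ax_unitR)
  finally show ?thesis .
qed

lemma inner_eq: "S1 (\<mu> x1 s1) (\<lambda>c. S1 (\<mu> b c1) (\<lambda>z. S1 y (\<lambda>k. S1 (\<mu> s2 k) (\<lambda>m. S1 (\<sigma> x2) (\<lambda>n. S1 (\<mu> m n) (\<lambda>k'. S1 (\<mu> a k') (\<lambda>m'. S1 (\<mu> m' d) (\<lambda>t. S1 (\<mu> z c) q * \<phi> t))))))))
  = S1 (\<mu> c1 x1) (\<lambda>i. S1 (\<sigma> x2) (\<lambda>z. S1 (\<mu> z d) (\<lambda>j. S1 (\<mu> b i) (\<lambda>t. S1 (\<mu> t s1) q) * S1 y (\<lambda>k. S1 (\<mu> s2 k) (\<lambda>m. S1 (\<mu> m j) (\<lambda>k'. S1 (\<mu> a k') \<phi>))))))"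
proof -
  have "S1 (\<mu> x1 s1) (\<lambda>c. S1 (\<mu> b c1) (\<lambda>z. S1 y (\<lambda>k. S1 (\<mu> s2 k) (\<lambda>m. S1 (\<sigma> x2) (\<lambda>n. S1 (\<mu> m n) (\<lambda>k'. S1 (\<mu> a k') (\<lambda>m'. S1 (\<mu> m' d) (\<lambda>t. S1 (\<mu> z c) q * \<phi> t))))))))
    = S1 (\<mu> x1 s1) (\<lambda>c. S1 (\<mu> b c1) (\<lambda>z. S1 (\<mu> z c) q)) * S1 y (\<lambda>k. S1 (\<mu> s2 k) (\<lambda>m. S1 (\<sigma> x2) (\<lambda>n. S1 (\<mu> m n) (\<lambda>k'. S1 (\<mu> a k') (\<lambda>m'. S1 (\<mu> m' d) \<phi>)))))"
    by (simp only: S1_cmult' S1_multc')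
  also have "\<dots> = S1 (\<mu> c1 x1) (\<lambda>i. S1 (\<mu> b i) (\<lambda>t. S1 (\<mu> t s1) q)) * S1 (\<sigma> x2) (\<lambda>z. S1 (\<mu> z d) (\<lambda>j. S1 y (\<lambda>k. S1 (\<mu> s2 k) (\<lambda>m. S1 (\<mu> m j) (\<lambda>k'. S1 (\<mu> a k') \<phi>)))))"
    by (simp only: assoc4 GL')
  also have "\<dots> = S1 (\<mu> c1 x1) (\<lambda>i. S1 (\<sigma> x2) (\<lambda>z. S1 (\<mu> z d) (\<lambda>j. S1 (\<mu> b i) (\<lambda>t. S1 (\<mu> t s1) q) * S1 y (\<lambda>k. S1 (\<mu> s2 k) (\<lambda>m. S1 (\<mu> m j) (\<lambda>k'. S1 (\<mu> a k') \<phi>))))))"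
    by (simp only: S1_prod3b)
  finally show ?thesis .
qed

lemma E3: "hmul H (fQ q) y = (\<lambda>l. \<Sum>c\<in>UNIV. Gv (ad H (R c) y) (\<lambda>m. S1 (\<mu> m c) q) l)"
proof (rule vec_eqI)
  fix \<phi>
  have "S1 (\<lambda>l. \<Sum>c\<in>UNIV. Gv (ad H (R c) y) (\<lambda>m. S1 (\<mu> m c) q) l) \<phi>
    = (\<Sum>c\<in>UNIV. S2 R (\<lambda>a b. S2 R (\<lambda>c1 d. S1 (\<mu> b c1) (\<lambda>z. S1 (\<mu> z c) q * S1 (R c) (\<lambda>w. S2 (\<delta> w) (\<lambda>i j. S1 y (\<lambda>k. S1 (\<mu> i k) (\<lambda>m. S1 (\<sigma> j) (\<lambda>n. S1 (\<mu> m n) (\<lambda>k'. S1 (\<mu> a k') (\<lambda>m'. S1 (\<mu> m' d) \<phi>)))))))))))"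
    by (simp only: S1_sumvec Gv_S ad_S)
  also have "\<dots> = (\<Sum>c\<in>UNIV. S2 R (\<lambda>a b. S2 R (\<lambda>c1 d. S1 (\<mu> b c1) (\<lambda>z. S1 (R c) (\<lambda>w. S2 (\<delta> w) (\<lambda>i j. S1 y (\<lambda>k. S1 (\<mu> i k) (\<lambda>m. S1 (\<sigma> j) (\<lambda>n. S1 (\<mu> m n) (\<lambda>k'. S1 (\<mu> a k') (\<lambda>m'. S1 (\<mu> m' d) (\<lambda>t. S1 (\<mu> z c) q * \<phi> t))))))))))))"
    by (simp only: S1_cmult S2_cmult)
  also have "\<dots> = (\<Sum>c\<in>UNIV. S2 R (\<lambda>a b. S2 R (\<lambda>c1 d. S1 (R c) (\<lambda>w. S1 (\<mu> b c1) (\<lambda>z. S2 (\<delta> w) (\<lambda>i j. S1 y (\<lambda>k. S1 (\<mu> i k) (\<lambda>m. S1 (\<sigma> j) (\<lambda>n. S1 (\<mu> m n) (\<lambda>k'. S1 (\<mu> a k') (\<lambda>m'. S1 (\<mu> m' d) (\<lambda>t. S1 (\<mu> z c) q * \<phi> t))))))))))))"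
    by (subst S1_swap) (rule refl)
  also have "\<dots> = (\<Sum>c\<in>UNIV. S2 R (\<lambda>a b. S2 R (\<lambda>c1 d. S1 (R c) (\<lambda>w. S2 (\<delta> w) (\<lambda>i j. S1 (\<mu> b c1) (\<lambda>z. S1 y (\<lambda>k. S1 (\<mu> i k) (\<lambda>m. S1 (\<sigma> j) (\<lambda>n. S1 (\<mu> m n) (\<lambda>k'. S1 (\<mu> a k') (\<lambda>m'. S1 (\<mu> m' d) (\<lambda>t. S1 (\<mu> z c) q * \<phi> t))))))))))))"
    by (simp only: S1S2_swap)
  also have "\<dots> = (\<Sum>c\<in>UNIV. S1 (R c) (\<lambda>w. S2 R (\<lambda>a b. S2 R (\<lambda>c1 d. S2 (\<delta> w) (\<lambda>i j. S1 (\<mu> b c1) (\<lambda>z. S1 y (\<lambda>k. S1 (\<mu> i k) (\<lambda>m. S1 (\<sigma> j) (\<lambda>n. S1 (\<mu> m n) (\<lambda>k'. S1 (\<mu> a k') (\<lambda>m'. S1 (\<mu> m' d) (\<lambda>t. S1 (\<mu> z c) q * \<phi> t))))))))))))"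
    by (subst S1S2_swap[symmetric], subst S1S2_swap[symmetric]) (rule refl)
  also have "\<dots> = S2 R (\<lambda>c w. S2 R (\<lambda>a b. S2 R (\<lambda>c1 d. S2 (\<delta> w) (\<lambda>i j. S1 (\<mu> b c1) (\<lambda>z. S1 y (\<lambda>k. S1 (\<mu> i k) (\<lambda>m. S1 (\<sigma> j) (\<lambda>n. S1 (\<mu> m n) (\<lambda>k'. S1 (\<mu> a k') (\<lambda>m'. S1 (\<mu> m' d) (\<lambda>t. S1 (\<mu> z c) q * \<phi> t)))))))))))"
    by (rule sum_S1_S2)
  also have "\<dots> = S2 R (\<lambda>c w. S2 (\<delta> w) (\<lambda>i j. S2 R (\<lambda>a b. S2 R (\<lambda>c1 d. S1 (\<mu> b c1) (\<lambda>z. S1 y (\<lambda>k. S1 (\<mu> i k) (\<lambda>m. S1 (\<sigma> j) (\<lambda>n. S1 (\<mu> m n) (\<lambda>k'. S1 (\<mu> a k') (\<lambda>m'. S1 (\<mu> m' d) (\<lambda>t. S1 (\<mu> z c) q * \<phi> t)))))))))))"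
    by (subst (3) S2_swap, subst (2) S2_swap) (rule refl)
  also have "\<dots> = S2 R (\<lambda>x1 x2. S2 R (\<lambda>s1 s2. S1 (\<mu> x1 s1) (\<lambda>c. S2 R (\<lambda>a b. S2 R (\<lambda>c1 d. S1 (\<mu> b c1) (\<lambda>z. S1 y (\<lambda>k. S1 (\<mu> s2 k) (\<lambda>m. S1 (\<sigma> x2) (\<lambda>n. S1 (\<mu> m n) (\<lambda>k'. S1 (\<mu> a k') (\<lambda>m'. S1 (\<mu> m' d) (\<lambda>t. S1 (\<mu> z c) q * \<phi> t))))))))))))"
    by (rule ax_R2)
  also have "\<dots> = S2 R (\<lambda>x1 x2. S2 R (\<lambda>s1 s2. S2 R (\<lambda>a b. S2 R (\<lambda>c1 d. S1 (\<mu> x1 s1) (\<lambda>c. S1 (\<mu> b c1) (\<lambda>z. S1 y (\<lambda>k. S1 (\<mu> s2 k) (\<lambda>m. S1 (\<sigma> x2) (\<lambda>n. S1 (\<mu> m n) (\<lambda>k'. S1 (\<mu> a k') (\<lambda>m'. S1 (\<mu> m' d) (\<lambda>t. S1 (\<mu> z c) q * \<phi> t))))))))))))"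
    by (simp only: S1S2_swap)
  also have "\<dots> = S2 R (\<lambda>a b. S2 R (\<lambda>s1 s2. S2 R (\<lambda>c1 d. S2 R (\<lambda>x1 x2. S1 (\<mu> x1 s1) (\<lambda>c. S1 (\<mu> b c1) (\<lambda>z. S1 y (\<lambda>k. S1 (\<mu> s2 k) (\<lambda>m. S1 (\<sigma> x2) (\<lambda>n. S1 (\<mu> m n) (\<lambda>k'. S1 (\<mu> a k') (\<lambda>m'. S1 (\<mu> m' d) (\<lambda>t. S1 (\<mu> z c) q * \<phi> t))))))))))))"
    by (subst (2) S2_swap, subst (1) S2_swap, subst (2) S2_swap, subst (3) S2_swap) (rule refl)
  also have "\<dots> = S2 R (\<lambda>a b. S2 R (\<lambda>s1 s2. S2 R (\<lambda>c1 d. S2 R (\<lambda>x1 x2. S1 (\<mu> c1 x1) (\<lambda>i. S1 (\<sigma> x2) (\<lambda>z. S1 (\<mu> z d) (\<lambda>j. S1 (\<mu> b i) (\<lambda>t. S1 (\<mu> t s1) q) * S1 y (\<lambda>k. S1 (\<mu> s2 k) (\<lambda>m. S1 (\<mu> m j) (\<lambda>k'. S1 (\<mu> a k') \<phi>))))))))))"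
    by (simp only: inner_eq)
  also have "\<dots> = S2 R (\<lambda>a b. S2 R (\<lambda>s1 s2. S1 \<eta> (\<lambda>i. S1 \<eta> (\<lambda>j. S1 (\<mu> b i) (\<lambda>t. S1 (\<mu> t s1) q) * S1 y (\<lambda>k. S1 (\<mu> s2 k) (\<lambda>m. S1 (\<mu> m j) (\<lambda>k'. S1 (\<mu> a k') \<phi>)))))))"
    by (simp only: N)
  also have "\<dots> = S2 R (\<lambda>a b. S2 R (\<lambda>s1 s2. S1 (\<mu> b s1) q * S1 y (\<lambda>k. S1 (\<mu> s2 k) (\<lambda>m. S1 (\<mu> a m) \<phi>))))"
    by (simp only: S1_prod ax_unitR unit3)
  finally have Rr: "S1 (\<lambda>l. \<Sum>c\<in>UNIV. Gv (ad H (R c) y) (\<lambda>m. S1 (\<mu> m c) q) l) \<phi> = \<dots>" .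
  have "S1 (hmul H (fQ q) y) \<phi> = S2 R (\<lambda>b a. S2 R (\<lambda>c d. S1 (\<mu> a c) q * S1 (\<mu> b d) (\<lambda>j. S1 y (\<lambda>b'. S1 (\<mu> j b') \<phi>))))"
    by (simp only: S1_hmul f_S S1_prod)
  also have "\<dots> = S2 R (\<lambda>b a. S2 R (\<lambda>c d. S1 (\<mu> a c) q * S1 y (\<lambda>b'. S1 (\<mu> b d) (\<lambda>j. S1 (\<mu> j b') \<phi>))))"
    by (subst S1_swap) (rule refl)
  also have "\<dots> = S2 R (\<lambda>b a. S2 R (\<lambda>c d. S1 (\<mu> a c) q * S1 y (\<lambda>b'. S1 (\<mu> d b') (\<lambda>j. S1 (\<mu> b j) \<phi>))))"
    by (simp only: ax_assoc)
  finally have Ll: "S1 (hmul H (fQ q) y) \<phi> = \<dots>" .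
  show "S1 (hmul H (fQ q) y) \<phi> = S1 (\<lambda>l. \<Sum>c\<in>UNIV. Gv (ad H (R c) y) (\<lambda>m. S1 (\<mu> m c) q) l) \<phi>"
    unfolding Ll Rr ..
qed


definition Qs :: "('i \<Rightarrow> 'i \<Rightarrow> 'a) \<Rightarrow> 'a" where
  "Qs F = S2 R (\<lambda>b a. S2 R (\<lambda>c d. S1 (\<mu> a c) (\<lambda>q1. S1 (\<mu> b d) (\<lambda>q2. F q1 q2))))"

lemma QC: "S2 (\<delta> l) (\<lambda>x1 x2. Qs (\<lambda>q1 q2. S1 (\<mu> q1 x1) A * S1 (\<mu> q2 x2) B))
  = S2 (\<delta> l) (\<lambda>x1 x2. Qs (\<lambda>q1 q2. S1 (\<mu> x1 q1) A * S1 (\<mu> x2 q2) B))"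
proof -
  have c01: "S2 (\<delta> l) (\<lambda>x1 x2. Qs (\<lambda>q1 q2. S1 (\<mu> x1 q1) A * S1 (\<mu> x2 q2) B))
    = S2 (\<delta> l) (\<lambda>x1 x2. S2 R (\<lambda>b a. S2 R (\<lambda>c d. S1 (\<mu> x1 a) (\<lambda>y. S1 (\<mu> y c) A) * S1 (\<mu> x2 b) (\<lambda>z. S1 (\<mu> z d) B))))"
    unfolding Qs_def by (simp only: S1_prod ax_assoc)
  have c12: "S2 (\<delta> l) (\<lambda>x1 x2. S2 R (\<lambda>b a. S1 (\<mu> x2 b) (\<lambda>i. S1 (\<mu> x1 a) (\<lambda>j. S2 R (\<lambda>c d. S1 (\<mu> j c) A * S1 (\<mu> i d) B)))))
    = S2 (\<delta> l) (\<lambda>x1 x2. S2 R (\<lambda>b a. S2 R (\<lambda>c d. S1 (\<mu> x1 a) (\<lambda>y. S1 (\<mu> y c) A) * S1 (\<mu> x2 b) (\<lambda>z. S1 (\<mu> z d) B))))"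
    by (simp only: S1S2_swap S1_prod_sw)
  have c23: "S2 (\<delta> l) (\<lambda>x1 x2. S2 R (\<lambda>b a. S1 (\<mu> x2 b) (\<lambda>i. S1 (\<mu> x1 a) (\<lambda>j. S2 R (\<lambda>c d. S1 (\<mu> j c) A * S1 (\<mu> i d) B)))))
    = S2 R (\<lambda>a' b'. S2 (\<delta> l) (\<lambda>x1 x2. S1 (\<mu> a' x1) (\<lambda>i. S1 (\<mu> b' x2) (\<lambda>j. S2 R (\<lambda>c d. S1 (\<mu> j c) A * S1 (\<mu> i d) B)))))"
    by (rule ax_comm)
  have c34: "S2 R (\<lambda>a' b'. S2 (\<delta> l) (\<lambda>x1 x2. S1 (\<mu> a' x1) (\<lambda>i. S1 (\<mu> b' x2) (\<lambda>j. S2 R (\<lambda>c d. S1 (\<mu> j c) A * S1 (\<mu> i d) B)))))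
    = S2 R (\<lambda>a' b'. S2 (\<delta> l) (\<lambda>x1 x2. S2 R (\<lambda>c d. S1 (\<mu> x2 c) (\<lambda>i. S1 (\<mu> x1 d) (\<lambda>j. S1 (\<mu> b' i) A * S1 (\<mu> a' j) B)))))"
    by (simp only: S1S2_swap S1_prod_sw S1_prod ax_assoc)
  have c45: "S2 R (\<lambda>a' b'. S2 (\<delta> l) (\<lambda>x1 x2. S2 R (\<lambda>c d. S1 (\<mu> x2 c) (\<lambda>i. S1 (\<mu> x1 d) (\<lambda>j. S1 (\<mu> b' i) A * S1 (\<mu> a' j) B)))))
    = S2 (\<delta> l) (\<lambda>x1 x2. S2 R (\<lambda>c d. S2 R (\<lambda>a' b'. S1 (\<mu> x2 c) (\<lambda>i. S1 (\<mu> x1 d) (\<lambda>j. S1 (\<mu> b' i) A * S1 (\<mu> a' j) B)))))"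
    by (subst S2_swap, subst (2) S2_swap) (rule refl)
  have c55: "S2 (\<delta> l) (\<lambda>x1 x2. S2 R (\<lambda>c d. S1 (\<mu> x2 c) (\<lambda>i. S1 (\<mu> x1 d) (\<lambda>j. S2 R (\<lambda>a' b'. S1 (\<mu> b' i) A * S1 (\<mu> a' j) B)))))
    = S2 (\<delta> l) (\<lambda>x1 x2. S2 R (\<lambda>c d. S2 R (\<lambda>a' b'. S1 (\<mu> x2 c) (\<lambda>i. S1 (\<mu> x1 d) (\<lambda>j. S1 (\<mu> b' i) A * S1 (\<mu> a' j) B)))))"
    by (simp only: S1S2_swap)
  have c56: "S2 (\<delta> l) (\<lambda>x1 x2. S2 R (\<lambda>c d. S1 (\<mu> x2 c) (\<lambda>i. S1 (\<mu> x1 d) (\<lambda>j. S2 R (\<lambda>a' b'. S1 (\<mu> b' i) A * S1 (\<mu> a' j) B)))))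
    = S2 R (\<lambda>c d. S2 (\<delta> l) (\<lambda>x1 x2. S1 (\<mu> c x1) (\<lambda>i. S1 (\<mu> d x2) (\<lambda>j. S2 R (\<lambda>a' b'. S1 (\<mu> b' i) A * S1 (\<mu> a' j) B)))))"
    by (rule ax_comm)
  have c67: "S2 R (\<lambda>c d. S2 (\<delta> l) (\<lambda>x1 x2. S1 (\<mu> c x1) (\<lambda>i. S1 (\<mu> d x2) (\<lambda>j. S2 R (\<lambda>a' b'. S1 (\<mu> b' i) A * S1 (\<mu> a' j) B)))))
    = S2 R (\<lambda>c d. S2 (\<delta> l) (\<lambda>x1 x2. S2 R (\<lambda>a' b'. S1 (\<mu> c x1) (\<lambda>i. S1 (\<mu> b' i) A) * S1 (\<mu> d x2) (\<lambda>j. S1 (\<mu> a' j) B))))"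
    by (simp only: S1S2_swap S1_prod)
  have c78: "S2 R (\<lambda>c d. S2 (\<delta> l) (\<lambda>x1 x2. S2 R (\<lambda>a' b'. S1 (\<mu> c x1) (\<lambda>i. S1 (\<mu> b' i) A) * S1 (\<mu> d x2) (\<lambda>j. S1 (\<mu> a' j) B))))
    = S2 (\<delta> l) (\<lambda>x1 x2. S2 R (\<lambda>a' b'. S2 R (\<lambda>c d. S1 (\<mu> c x1) (\<lambda>i. S1 (\<mu> b' i) A) * S1 (\<mu> d x2) (\<lambda>j. S1 (\<mu> a' j) B))))"
    by (subst S2_swap, subst (2) S2_swap) (rule refl)
  have c8: "S2 (\<delta> l) (\<lambda>x1 x2. Qs (\<lambda>q1 q2. S1 (\<mu> q1 x1) A * S1 (\<mu> q2 x2) B))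
    = S2 (\<delta> l) (\<lambda>x1 x2. S2 R (\<lambda>a' b'. S2 R (\<lambda>c d. S1 (\<mu> c x1) (\<lambda>i. S1 (\<mu> b' i) A) * S1 (\<mu> d x2) (\<lambda>j. S1 (\<mu> a' j) B))))"
    unfolding Qs_def by (simp only: S1_prod ax_assoc)
  show ?thesis using c01 c12 c23 c34 c45 c55 c56 c67 c78 c8 by simp
qed


lemma f_S': "S1 (fQ p) \<phi> = Qs (\<lambda>q1 q2. p q1 * \<phi> q2)"
  unfolding f_S Qs_def ..

lemma Qs_S2: "Qs (\<lambda>q1 q2. S2 T (\<lambda>a b. F a b q1 q2)) = S2 T (\<lambda>a b. Qs (\<lambda>q1 q2. F a b q1 q2))"
proof -
  have "Qs (\<lambda>q1 q2. S2 T (\<lambda>a b. F a b q1 q2)) = S2 R (\<lambda>b' a'. S2 R (\<lambda>c d. S2 T (\<lambda>a b. S1 (\<mu> a' c) (\<lambda>q1. S1 (\<mu> b' d) (\<lambda>q2. F a b q1 q2)))))"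
    unfolding Qs_def by (simp only: S1S2_swap)
  also have "\<dots> = S2 T (\<lambda>a b. Qs (\<lambda>q1 q2. F a b q1 q2))"
    unfolding Qs_def by (subst (2) S2_swap, subst S2_swap) (rule refl)
  finally show ?thesis .
qed

lemma Qs_cmult: "c * Qs F = Qs (\<lambda>q1 q2. c * F q1 q2)"
  unfolding Qs_def by (simp only: S2_cmult S1_cmult)
lemma Qs_multc: "Qs F * c = Qs (\<lambda>q1 q2. F q1 q2 * c)"
  unfolding Qs_def by (simp only: S2_multc S1_multc)

lemma Qs_S1: "Qs (\<lambda>q1 q2. S1 x (\<lambda>w. F w q1 q2)) = S1 x (\<lambda>w. Qs (\<lambda>q1 q2. F w q1 q2))"
proof -
  have e: "S1 x G = S2 (\<lambda>i j. x i * bvec i j) (\<lambda>i j. G i)" for G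
    unfolding S1_def S2_def bvec_def by simp
  show ?thesis unfolding e Qs_S2 ..
qed

definition hp :: "('i \<Rightarrow> 'a) \<Rightarrow> ('i \<Rightarrow> 'a) \<Rightarrow> 'i \<Rightarrow> 'a" where
  "hp h p = (\<lambda>x. S1 h (\<lambda>w. S2 (\<delta> w) (\<lambda>i j. S1 (\<sigma> i) (\<lambda>s. S1 (\<mu> s x) (\<lambda>z. S1 (\<mu> z j) p)))))"

lemma pA: "S1 (\<sigma> i) (\<lambda>s. S1 (\<mu> s q1) (\<lambda>z. S1 (\<mu> z j) p)) = S1 (\<mu> q1 j) (\<lambda>z. S1 (\<sigma> i) (\<lambda>s. S1 (\<mu> s z) p))"
  by (simp only: ax_assoc) (rule S1_swap)
lemma pB: "S1 (\<sigma> j') (\<lambda>b. S1 (\<mu> a b) (\<lambda>m'. S1 (\<mu> q2 m') \<phi>)) = S1 (\<mu> q2 a) (\<lambda>z. S1 (\<sigma> j') (\<lambda>b. S1 (\<mu> z b) \<phi>))"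
  by (simp only: S1_swap[of "\<mu> q2 a"] ax_assoc)
lemma pC: "S1 (\<sigma> i0) (\<lambda>a. S1 (\<mu> a b) (\<lambda>m'. S1 (\<mu> m' q1) p)) = S1 (\<mu> b q1) (\<lambda>z. S1 (\<sigma> i0) (\<lambda>s. S1 (\<mu> s z) p))"
  by (simp only: ax_assoc) (rule S1_swap)

lemma E4w: "S2 (\<delta> w) (\<lambda>i j. Qs (\<lambda>q1 q2. S1 (\<sigma> i) (\<lambda>s. S1 (\<mu> s q1) (\<lambda>z. S1 (\<mu> z j) p)) * \<phi> q2))
  = S2 (\<delta> w) (\<lambda>i j. Qs (\<lambda>q1 q2. p q1 * S1 (\<mu> i q2) (\<lambda>m. S1 (\<sigma> j) (\<lambda>n. S1 (\<mu> m n) \<phi>))))"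
proof -
  have "S2 (\<delta> w) (\<lambda>i j. Qs (\<lambda>q1 q2. S1 (\<sigma> i) (\<lambda>s. S1 (\<mu> s q1) (\<lambda>z. S1 (\<mu> z j) p)) * \<phi> q2))
     = S2 (\<delta> w) (\<lambda>i m. S2 (\<delta> m) (\<lambda>j k. Qs (\<lambda>q1 q2. S1 (\<sigma> i) (\<lambda>s. S1 (\<mu> s q1) (\<lambda>z. S1 (\<mu> z j) p)) * \<phi> q2) * \<epsilon> k))"
    by (simp only: ax_counitR)
  also have "\<dots> = S2 (\<delta> w) (\<lambda>i m. S2 (\<delta> m) (\<lambda>j k. Qs (\<lambda>q1 q2. S1 (\<sigma> i) (\<lambda>s. S1 (\<mu> s q1) (\<lambda>z. S1 (\<mu> z j) p)) * S2 (\<delta> k) (\<lambda>a j'. S1 (\<sigma> j') (\<lambda>b. S1 (\<mu> a b) (\<lambda>m'. S1 (\<mu> q2 m') \<phi>))))))"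
    by (simp only: ax_antipR ax_unitR Qs_multc Qs_cmult mult_ac)
  also have "\<dots> = S2 (\<delta> w) (\<lambda>i m. S2 (\<delta> m) (\<lambda>j k. S2 (\<delta> k) (\<lambda>a j'. Qs (\<lambda>q1 q2. S1 (\<sigma> i) (\<lambda>s. S1 (\<mu> s q1) (\<lambda>z. S1 (\<mu> z j) p)) * S1 (\<sigma> j') (\<lambda>b. S1 (\<mu> a b) (\<lambda>m'. S1 (\<mu> q2 m') \<phi>))))))"
    by (simp only: S2_cmult Qs_S2)
  also have "\<dots> = S2 (\<delta> w) (\<lambda>i m. S2 (\<delta> m) (\<lambda>g j'. S2 (\<delta> g) (\<lambda>j a. Qs (\<lambda>q1 q2. S1 (\<sigma> i) (\<lambda>s. S1 (\<mu> s q1) (\<lambda>z. S1 (\<mu> z j) p)) * S1 (\<sigma> j') (\<lambda>b. S1 (\<mu> a b) (\<lambda>m'. S1 (\<mu> q2 m') \<phi>))))))"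
    by (subst (2) ax_coassoc[symmetric]) (rule refl)
  also have "\<dots> = S2 (\<delta> w) (\<lambda>i m. S2 (\<delta> m) (\<lambda>g j'. S2 (\<delta> g) (\<lambda>j a. Qs (\<lambda>q1 q2. S1 (\<mu> q1 j) (\<lambda>z. S1 (\<sigma> i) (\<lambda>s. S1 (\<mu> s z) p)) * S1 (\<mu> q2 a) (\<lambda>z. S1 (\<sigma> j') (\<lambda>b. S1 (\<mu> z b) \<phi>))))))"
    by (simp only: pA pB)
  also have "\<dots> = S2 (\<delta> w) (\<lambda>i m. S2 (\<delta> m) (\<lambda>g j'. S2 (\<delta> g) (\<lambda>j a. Qs (\<lambda>q1 q2. S1 (\<mu> j q1) (\<lambda>z. S1 (\<sigma> i) (\<lambda>s. S1 (\<mu> s z) p)) * S1 (\<mu> a q2) (\<lambda>z. S1 (\<sigma> j') (\<lambda>b. S1 (\<mu> z b) \<phi>))))))"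
    by (simp only: QC)
  finally have Rr: "S2 (\<delta> w) (\<lambda>i j. Qs (\<lambda>q1 q2. S1 (\<sigma> i) (\<lambda>s. S1 (\<mu> s q1) (\<lambda>z. S1 (\<mu> z j) p)) * \<phi> q2)) = \<dots>" .
  have "S2 (\<delta> w) (\<lambda>i j. Qs (\<lambda>q1 q2. p q1 * S1 (\<mu> i q2) (\<lambda>m. S1 (\<sigma> j) (\<lambda>n. S1 (\<mu> m n) \<phi>))))
     = S2 (\<delta> w) (\<lambda>m j. S2 (\<delta> m) (\<lambda>k i. \<epsilon> k * Qs (\<lambda>q1 q2. p q1 * S1 (\<mu> i q2) (\<lambda>m. S1 (\<sigma> j) (\<lambda>n. S1 (\<mu> m n) \<phi>)))))"
    by (simp only: ax_counitL)
  also have "\<dots> = S2 (\<delta> w) (\<lambda>k m. S2 (\<delta> m) (\<lambda>i j. \<epsilon> k * Qs (\<lambda>q1 q2. p q1 * S1 (\<mu> i q2) (\<lambda>m. S1 (\<sigma> j) (\<lambda>n. S1 (\<mu> m n) \<phi>)))))"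
    by (rule ax_coassoc)
  also have "\<dots> = S2 (\<delta> w) (\<lambda>k m. S2 (\<delta> m) (\<lambda>i j. Qs (\<lambda>q1 q2. S2 (\<delta> k) (\<lambda>i0 b. S1 (\<sigma> i0) (\<lambda>a. S1 (\<mu> a b) (\<lambda>m'. S1 (\<mu> m' q1) p))) * S1 (\<mu> i q2) (\<lambda>m. S1 (\<sigma> j) (\<lambda>n. S1 (\<mu> m n) \<phi>)))))"
    by (simp only: ax_antipL ax_unitL Qs_multc Qs_cmult mult_ac)
  also have "\<dots> = S2 (\<delta> w) (\<lambda>k m. S2 (\<delta> m) (\<lambda>i j. S2 (\<delta> k) (\<lambda>i0 b. Qs (\<lambda>q1 q2. S1 (\<sigma> i0) (\<lambda>a. S1 (\<mu> a b) (\<lambda>m'. S1 (\<mu> m' q1) p)) * S1 (\<mu> i q2) (\<lambda>m. S1 (\<sigma> j) (\<lambda>n. S1 (\<mu> m n) \<phi>))))))"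
    by (simp only: S2_multc Qs_S2)
  also have "\<dots> = S2 (\<delta> w) (\<lambda>k m. S2 (\<delta> k) (\<lambda>i0 b. S2 (\<delta> m) (\<lambda>i j. Qs (\<lambda>q1 q2. S1 (\<sigma> i0) (\<lambda>a. S1 (\<mu> a b) (\<lambda>m'. S1 (\<mu> m' q1) p)) * S1 (\<mu> i q2) (\<lambda>m. S1 (\<sigma> j) (\<lambda>n. S1 (\<mu> m n) \<phi>))))))"
    by (subst (2) S2_swap) (rule refl)
  also have "\<dots> = S2 (\<delta> w) (\<lambda>i0 n. S2 (\<delta> n) (\<lambda>b m. S2 (\<delta> m) (\<lambda>i j. Qs (\<lambda>q1 q2. S1 (\<sigma> i0) (\<lambda>a. S1 (\<mu> a b) (\<lambda>m'. S1 (\<mu> m' q1) p)) * S1 (\<mu> i q2) (\<lambda>m. S1 (\<sigma> j) (\<lambda>n. S1 (\<mu> m n) \<phi>))))))"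
    by (rule ax_coassoc)
  also have "\<dots> = S2 (\<delta> w) (\<lambda>i0 n. S2 (\<delta> n) (\<lambda>g j. S2 (\<delta> g) (\<lambda>b i. Qs (\<lambda>q1 q2. S1 (\<sigma> i0) (\<lambda>a. S1 (\<mu> a b) (\<lambda>m'. S1 (\<mu> m' q1) p)) * S1 (\<mu> i q2) (\<lambda>m. S1 (\<sigma> j) (\<lambda>n. S1 (\<mu> m n) \<phi>))))))"
    by (subst (2) ax_coassoc[symmetric]) (rule refl)
  also have "\<dots> = S2 (\<delta> w) (\<lambda>i0 n. S2 (\<delta> n) (\<lambda>g j. S2 (\<delta> g) (\<lambda>b i. Qs (\<lambda>q1 q2. S1 (\<mu> b q1) (\<lambda>z. S1 (\<sigma> i0) (\<lambda>s. S1 (\<mu> s z) p)) * S1 (\<mu> i q2) (\<lambda>m. S1 (\<sigma> j) (\<lambda>n. S1 (\<mu> m n) \<phi>))))))"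
    by (simp only: pC)
  finally have Ll: "S2 (\<delta> w) (\<lambda>i j. Qs (\<lambda>q1 q2. p q1 * S1 (\<mu> i q2) (\<lambda>m. S1 (\<sigma> j) (\<lambda>n. S1 (\<mu> m n) \<phi>)))) = \<dots>" .
  show ?thesis unfolding Ll Rr ..
qed

lemma E4: "ad H h (fQ p) = fQ (hp h p)"
proof (rule vec_eqI)
  fix \<phi>
  have "S1 (fQ (hp h p)) \<phi> = S1 h (\<lambda>w. S2 (\<delta> w) (\<lambda>i j. Qs (\<lambda>q1 q2. S1 (\<sigma> i) (\<lambda>s. S1 (\<mu> s q1) (\<lambda>z. S1 (\<mu> z j) p)) * \<phi> q2)))"
    unfolding f_S' hp_def by (simp only: S1_multc S2_multc Qs_S1 Qs_S2)
  also have "\<dots> = S1 h (\<lambda>w. S2 (\<delta> w) (\<lambda>i j. Qs (\<lambda>q1 q2. p q1 * S1 (\<mu> i q2) (\<lambda>m. S1 (\<sigma> j) (\<lambda>n. S1 (\<mu> m n) \<phi>)))))"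
    by (simp only: E4w)
  also have "\<dots> = S1 (ad H h (fQ p)) \<phi>"
    by (simp only: ad_S f_S')
  finally show "S1 (ad H h (fQ p)) \<phi> = S1 (fQ (hp h p)) \<phi>" ..
qed


definition lr :: "'i \<Rightarrow> ('i \<Rightarrow> 'a) \<Rightarrow> 'i \<Rightarrow> 'a" where
  "lr k p = (\<lambda>m. S2 R (\<lambda>r1 r2. S2 R (\<lambda>u1 u2. \<mu> r1 u2 k * S1 (\<mu> r2 m) (\<lambda>z. S1 (\<mu> z u1) p))))"

lemma rowS: "S1 (\<lambda>j. T k j) \<phi> = S2 T (\<lambda>x y. bvec k x * \<phi> y)"
  unfolding S1_def S2_def bvec_def by (simp add: mult_ac)

lemma E6: "(\<lambda>j. hcomul H (fQ p) k j) = fQ (lr k p)"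
proof (rule vec_eqI)
  fix \<phi>
  have "S1 (\<lambda>j. hcomul H (fQ p) k j) \<phi> = S2 R (\<lambda>b a. S2 R (\<lambda>c d. S1 (\<mu> a c) p * S1 (\<mu> b d) (\<lambda>l. S2 (\<delta> l) (\<lambda>x y. bvec k x * \<phi> y))))"
    by (simp only: rowS[of "hcomul H (fQ p)"] S2_hcomul f_S S1_prod)
  also have "\<dots> = S2 R (\<lambda>b a. S2 R (\<lambda>c d. S1 (\<mu> a c) p * S2 (\<delta> b) (\<lambda>p' q'. S2 (\<delta> d) (\<lambda>r s. S1 (\<mu> p' r) (\<lambda>x. S1 (\<mu> q' s) (\<lambda>y. bvec k x * \<phi> y))))))"
    by (simp only: ax_Dmult)
  also have "\<dots> = S2 R (\<lambda>b a. S2 R (\<lambda>c d. S2 (\<delta> b) (\<lambda>p' q'. S2 (\<delta> d) (\<lambda>r s. S1 (\<mu> a c) p * (\<mu> p' r k * S1 (\<mu> q' s) \<phi>)))))"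
    by (simp only: S2_cmult S1_prod S1_bvec2)
  also have "\<dots> = S2 R (\<lambda>b a. S2 (\<delta> b) (\<lambda>p' q'. S2 R (\<lambda>c d. S2 (\<delta> d) (\<lambda>r s. S1 (\<mu> a c) p * (\<mu> p' r k * S1 (\<mu> q' s) \<phi>)))))"
    by (subst (2) S2_swap) (rule refl)
  also have "\<dots> = S2 R (\<lambda>i c0. S2 R (\<lambda>j c0'. S1 (\<mu> c0 c0') (\<lambda>a. S2 R (\<lambda>c d. S2 (\<delta> d) (\<lambda>r s. S1 (\<mu> a c) p * (\<mu> i r k * S1 (\<mu> j s) \<phi>))))))"
    by (rule ax_R1)
  also have "\<dots> = S2 R (\<lambda>i c0. S2 R (\<lambda>j c0'. S2 R (\<lambda>c d. S2 (\<delta> d) (\<lambda>r s. S1 (\<mu> c0 c0') (\<lambda>a. S1 (\<mu> a c) p * (\<mu> i r k * S1 (\<mu> j s) \<phi>))))))"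
    by (simp only: S1S2_swap)
  also have "\<dots> = S2 R (\<lambda>i c0. S2 R (\<lambda>j c0'. S2 R (\<lambda>a2 k2. S2 R (\<lambda>a2' j2. S1 (\<mu> a2 a2') (\<lambda>c. S1 (\<mu> c0 c0') (\<lambda>a. S1 (\<mu> a c) p * (\<mu> i j2 k * S1 (\<mu> j k2) \<phi>)))))))"
    by (simp only: ax_R2)
  also have "\<dots> = S2 R (\<lambda>j c0'. S2 R (\<lambda>a2 k2. S2 R (\<lambda>i c0. S2 R (\<lambda>a2' j2. S1 (\<mu> a2 a2') (\<lambda>c. S1 (\<mu> c0 c0') (\<lambda>a. S1 (\<mu> a c) p * (\<mu> i j2 k * S1 (\<mu> j k2) \<phi>)))))))"
    by (subst (1) S2_swap, subst (2) S2_swap) (rule refl)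
  finally have Ll: "S1 (\<lambda>j. hcomul H (fQ p) k j) \<phi> = \<dots>" .
  have "S1 (fQ (lr k p)) \<phi> = S2 R (\<lambda>b a. S2 R (\<lambda>c d. S1 (\<mu> a c) (lr k p) * S1 (\<mu> b d) \<phi>))"
    by (simp only: f_S S1_prod)
  also have "\<dots> = S2 R (\<lambda>b a. S2 R (\<lambda>c d. S2 R (\<lambda>r1 r2. S2 R (\<lambda>u1 u2. \<mu> r1 u2 k * S1 (\<mu> a c) (\<lambda>m. S1 (\<mu> r2 m) (\<lambda>z. S1 (\<mu> z u1) p)) * S1 (\<mu> b d) \<phi>))))"
    unfolding lr_def by (simp only: S1S2_swap S1_cmult' S2_multc)
  finally have Rr: "S1 (fQ (lr k p)) \<phi> = \<dots>" .
  show "S1 (\<lambda>j. hcomul H (fQ p) k j) \<phi> = S1 (fQ (lr k p)) \<phi>"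
    unfolding Ll Rr by (simp only: S1_cmult' S1_multc' ax_assoc mult_ac)
qed


lemma comb_list: assumes V: "subspace V" and g: "\<forall>z\<in>set zs. g z \<in> V"
  shows "(\<lambda>m. \<Sum>z\<leftarrow>zs. c z * g z m) \<in> V"
  using g
proof (induction zs)
  case Nil
  then show ?case using V unfolding subspace_def vzero_def by simp
next
  case (Cons z zs)
  then have "(\<lambda>m. \<Sum>z\<leftarrow>zs. c z * g z m) \<in> V" "g z \<in> V" by auto
  then have "vadd (vsmult (c z) (g z)) (\<lambda>m. \<Sum>z\<leftarrow>zs. c z * g z m) \<in> V"
    using V unfolding subspace_def by blast
  then show ?case unfolding vadd_def vsmult_def by simp
qed

lemma comb_fin: assumes V: "subspace V" and A: "finite A" and x: "\<forall>i\<in>A. x i \<in> V"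
  shows "(\<lambda>m. \<Sum>i\<in>A. c i * x i m) \<in> V"
  using A x
proof (induction A rule: finite_induct)
  case empty
  then show ?case using V unfolding subspace_def vzero_def by simp
next
  case (insert a F)
  then have "(\<lambda>m. \<Sum>i\<in>F. c i * x i m) \<in> V" "x a \<in> V" by auto
  then have "vadd (vsmult (c a) (x a)) (\<lambda>m. \<Sum>i\<in>F. c i * x i m) \<in> V"
    using V unfolding subspace_def by blast
  then show ?case using insert unfolding vadd_def vsmult_def by simp
qed

lemma memS1: assumes V: "subspace V" and F: "\<And>w. (\<lambda>x. F w x) \<in> V"
  shows "(\<lambda>x. S1 h (\<lambda>w. F w x)) \<in> V"
  unfolding S1_def using comb_fin[OF V finite_UNIV, of "\<lambda>w. (\<lambda>x. F w x)" h] F by simp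

lemma memS2: assumes V: "subspace V" and F: "\<And>i j. (\<lambda>x. F i j x) \<in> V"
  shows "(\<lambda>x. S2 T (\<lambda>i j. F i j x)) \<in> V"
proof -
  have "\<forall>i. (\<lambda>x. \<Sum>j\<in>UNIV. T i j * F i j x) \<in> V"
    using comb_fin[OF V finite_UNIV] F by blast
  then have "(\<lambda>x. \<Sum>i\<in>UNIV. 1 * (\<Sum>j\<in>UNIV. T i j * F i j x)) \<in> V"
    using comb_fin[OF V finite_UNIV, of "\<lambda>i x. \<Sum>j\<in>UNIV. T i j * F i j x" "\<lambda>_. 1"] by simp
  then show ?thesis unfolding S2_def by simp
qed

lemma memc: assumes V: "subspace V" and F: "(\<lambda>x. F x) \<in> V" shows "(\<lambda>x. c * F x) \<in> V"
  using V F unfolding subspace_def vsmult_def by blast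

lemma dcomul_S: "dcomul H p i j = S1 (\<mu> i j) p"
  unfolding dcomul_def S1_def by (simp add: mult_ac)

lemma in_tensorE: assumes "in_tensor V W T"
  shows "\<exists>ps. set ps \<subseteq> V \<times> W \<and> (\<forall>i j. T i j = (\<Sum>z\<leftarrow>ps. fst z i * snd z j))"
  using assms unfolding in_tensor_def by (auto simp: split_def)

lemma S1_sum_list: "S1 u (\<lambda>z. \<Sum>q\<leftarrow>ps. F q z) = (\<Sum>q\<leftarrow>ps. S1 u (F q))"
  by (induction ps) (simp_all add: S1_def sum.distrib distrib_left)

lemma Tr_mem: assumes C: "subcoalgebra_dual H C" and p: "p \<in> C"
  shows "(\<lambda>m. S1 (\<mu> x m) (\<lambda>z. S1 (\<mu> z y) p)) \<in> C"
proof -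
  have sub: "subspace C" using C unfolding subcoalgebra_dual_def by blast
  have rows: "(\<lambda>m. S1 (\<mu> x m) v) \<in> C" if "v \<in> C" for v
  proof -
    have "in_tensor C C (dcomul H v)" using C \<open>v \<in> C\<close> unfolding subcoalgebra_dual_def by blast
    then obtain ps where ps: "set ps \<subseteq> C \<times> C" "\<And>i j. dcomul H v i j = (\<Sum>z\<leftarrow>ps. fst z i * snd z j)"
      using in_tensorE by blast
    have "\<forall>z\<in>set ps. snd z \<in> C" using ps(1) by (auto simp: subset_iff mem_Times_iff)
    then have "(\<lambda>m. \<Sum>z\<leftarrow>ps. fst z x * snd z m) \<in> C"
      using comb_list[OF sub, of ps snd "\<lambda>z. fst z x"] by blast
    moreover have "(\<lambda>m. S1 (\<mu> x m) v) = (\<lambda>m. \<Sum>z\<leftarrow>ps. fst z x * snd z m)"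
      using ps(2) by (simp add: dcomul_S)
    ultimately show ?thesis by simp
  qed
  have "in_tensor C C (dcomul H p)" using C p unfolding subcoalgebra_dual_def by blast
  then obtain ps where ps: "set ps \<subseteq> C \<times> C" "\<And>i j. dcomul H p i j = (\<Sum>z\<leftarrow>ps. fst z i * snd z j)"
    using in_tensorE by blast
  have "(\<lambda>m. S1 (\<mu> x m) (\<lambda>z. S1 (\<mu> z y) p)) = (\<lambda>m. \<Sum>z\<leftarrow>ps. snd z y * S1 (\<mu> x m) (fst z))"
    using ps(2) by (simp add: dcomul_S[symmetric] S1_sum_list S1_multc' mult.commute)
  moreover have "(\<lambda>m. \<Sum>z\<leftarrow>ps. snd z y * S1 (\<mu> x m) (fst z)) \<in> C"
  proof -
    have "\<forall>z\<in>set ps. fst z \<in> C" using ps(1) by (auto simp: subset_iff mem_Times_iff)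
    then have "\<forall>z\<in>set ps. (\<lambda>m. S1 (\<mu> x m) (fst z)) \<in> C" using rows by blast
    then show ?thesis using comb_list[OF sub, of ps "\<lambda>z m. S1 (\<mu> x m) (fst z)" "\<lambda>z. snd z y"] by blast
  qed
  ultimately show ?thesis by simp
qed


lemma hp_mem: assumes C: "subcoalgebra_dual H C" and p: "p \<in> C" shows "hp h p \<in> C"
proof -
  have sub: "subspace C" using C unfolding subcoalgebra_dual_def by blast
  show ?thesis unfolding hp_def
    by (intro memS1[OF sub] memS2[OF sub] Tr_mem[OF C p])
qed

lemma lr_mem: assumes C: "subcoalgebra_dual H C" and p: "p \<in> C" shows "lr k p \<in> C"
proof -
  have sub: "subspace C" using C unfolding subcoalgebra_dual_def by blast
  show ?thesis unfolding lr_def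
    by (intro memS2[OF sub] memc[OF sub] Tr_mem[OF C p])
qed

lemma qc_mem: assumes C: "subcoalgebra_dual H C" and q: "q \<in> C" shows "(\<lambda>m. S1 (\<mu> m c) q) \<in> C"
proof -
  have sub: "subspace C" using C unfolding subcoalgebra_dual_def by blast
  have "(\<lambda>m. S1 \<eta> (\<lambda>x. S1 (\<mu> x m) (\<lambda>z. S1 (\<mu> z c) q))) \<in> C"
    by (intro memS1[OF sub] Tr_mem[OF C q])
  then show ?thesis by (simp only: ax_unitL)
qed

lemma f_add: "fQ (vadd x y) = vadd (fQ x) (fQ y)"
  unfolding drinfeld_def vadd_def by (simp add: distrib_right sum.distrib)
lemma f_smult: "fQ (vsmult c x) = vsmult c (fQ x)"
  unfolding drinfeld_def vsmult_def by (simp add: sum_distrib_left mult.assoc)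
lemma f_zero: "fQ vzero = vzero"
  unfolding drinfeld_def vzero_def by simp

lemma f_subspace: assumes S: "subspace C" shows "subspace (fQ ` C)"
proof -
  have z: "vzero \<in> fQ ` C" using S f_zero unfolding subspace_def by (metis image_eqI)
  have a: "vadd x y \<in> fQ ` C" if xy: "x \<in> fQ ` C" "y \<in> fQ ` C" for x y
  proof -
    obtain a b where "a \<in> C" "b \<in> C" "x = fQ a" "y = fQ b" using xy by blast
    then show ?thesis using S f_add[of a b] unfolding subspace_def by (metis image_eqI)
  qed
  have m: "vsmult c x \<in> fQ ` C" if xx: "x \<in> fQ ` C" for x c
  proof -
    obtain a where "a \<in> C" "x = fQ a" using xx by blast
    then show ?thesis using S f_smult[of c a] unfolding subspace_def by (metis image_eqI)
  qed
  show ?thesis unfolding subspace_def using z a m by blast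
qed

lemma part1: assumes C: "subcoalgebra_dual H C"
  shows "left_coideal H (fQ ` C) \<and> ad_stable H (fQ ` C)"
proof -
  have sub: "subspace C" using C unfolding subcoalgebra_dual_def by blast
  obtain ks :: "'i list" where ks: "set ks = UNIV" "distinct ks"
    using finite_distinct_list[OF finite_UNIV] by blast
  have coid: "in_tensor UNIV (fQ ` C) (hcomul H (fQ p))" if p: "p \<in> C" for p
  proof -
    let ?ps = "map (\<lambda>k. (bvec k, \<lambda>j. hcomul H (fQ p) k j)) ks"
    have "set ?ps \<subseteq> UNIV \<times> fQ ` C"
      using E6 lr_mem[OF C p] by auto
    moreover have "hcomul H (fQ p) = (\<lambda>i j. \<Sum>(v, w)\<leftarrow>?ps. v i * w j)"
    proof (intro ext)
      fix i j
      have "(\<Sum>(v, w)\<leftarrow>?ps. v i * w j) = (\<Sum>k\<leftarrow>ks. bvec k i * hcomul H (fQ p) k j)"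
        by (simp add: comp_def)
      also have "\<dots> = (\<Sum>k\<in>UNIV. bvec k i * hcomul H (fQ p) k j)"
        using ks by (simp add: sum_list_distinct_conv_sum_set)
      also have "\<dots> = hcomul H (fQ p) i j"
        by (simp add: bvec_def)
      finally show "hcomul H (fQ p) i j = (\<Sum>(v, w)\<leftarrow>?ps. v i * w j)" ..
    qed
    ultimately show ?thesis unfolding in_tensor_def by blast
  qed
  have "left_coideal H (fQ ` C)"
    unfolding left_coideal_def using f_subspace[OF sub] coid by blast
  moreover have "ad_stable H (fQ ` C)"
    unfolding ad_stable_def using E4 hp_mem[OF C] by blast
  ultimately show ?thesis ..
qed

lemma part2: assumes A: "hopf_subalgebra_dual H A"
  shows "normal_lcs H (fQ ` A)"
proof -
  have C: "subcoalgebra_dual H A" using A unfolding hopf_subalgebra_dual_def by blast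
  have sub: "subspace A" using C unfolding subcoalgebra_dual_def by blast
  have P1: "left_coideal H (fQ ` A) \<and> ad_stable H (fQ ` A)" by (rule part1[OF C])
  have one: "\<eta> \<in> fQ ` A"
    using A E5 unfolding hopf_subalgebra_dual_def by (metis image_eqI)
  have clos: "hmul H x y \<in> fQ ` A" if x: "x \<in> fQ ` A" and y: "y \<in> fQ ` A" for x y
  proof -
    obtain q where q: "q \<in> A" "x = fQ q" using x by blast
    have "\<forall>c. \<exists>p'. p' \<in> A \<and> ad H (R c) y = fQ p'"
      using P1 y unfolding ad_stable_def by blast
    then obtain pc where pc: "\<And>c. pc c \<in> A" "\<And>c. ad H (R c) y = fQ (pc c)"
      by metis
    have "hmul H x y = (\<lambda>l. \<Sum>c\<in>UNIV. 1 * fQ (dmul H (pc c) (\<lambda>m. S1 (\<mu> m c) q)) l)"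
      unfolding q(2) E3 pc(2) E1[symmetric] by simp
    moreover have "\<forall>c\<in>UNIV. fQ (dmul H (pc c) (\<lambda>m. S1 (\<mu> m c) q)) \<in> fQ ` A"
      using A pc(1) qc_mem[OF C q(1)] unfolding hopf_subalgebra_dual_def by blast
    ultimately show ?thesis
      using comb_fin[OF f_subspace[OF sub] finite_UNIV, of "\<lambda>c. fQ (dmul H (pc c) (\<lambda>m. S1 (\<mu> m c) q))" "\<lambda>_. 1"]
      by simp
  qed
  show ?thesis
    unfolding normal_lcs_def left_coideal_subalgebra_def using P1 one clos by blast
qed

end

theorem lemma4p1:
  fixes H :: "('i::finite, 'a::field) hopf_data" and R :: "'i \<Rightarrow> 'i \<Rightarrow> 'a"
  assumes "hopf_algebra H" and "semisimple H" and "quasitriangular H R"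
  shows "(\<forall>C. subcoalgebra_dual H C \<longrightarrow>
            left_coideal H (drinfeld H R ` C) \<and> ad_stable H (drinfeld H R ` C)) \<and>
         (\<forall>A. hopf_subalgebra_dual H A \<longrightarrow> normal_lcs H (drinfeld H R ` A))"
proof -
  interpret QT H R using assms(1,3) by unfold_locales
  show ?thesis using part1 part2 by blast
qed

end
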